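(* Let $\tau\in\Gamma_S^\infty$ be a tree with a unique infinite spine, and suppose that its Hausdorff dimension $d_h$, its hull dimension $\bar d_h$ and its spectral dimension $d_s$ all exist (in the strong senses defined in the context). Then $$\frac{2d_h}{1+d_h}\;\le\; d_s\;\le\;\frac{2\bar d_h}{1+\bar d_h}.$$
   Context: $\Gamma$ is the set of planar (ordered) rooted, locally finite trees whose root $r$ has degree one. $\Gamma_S^\infty\subset\Gamma$ is the set of infinite trees in $\Gamma$ containing exactly one infinite non-backtracking path starting at $r$, called the spine; its vertices, ordered away from $r$, are $s_1,s_2,s_3,\dots$ (set $s_0=r$). For a graph $G$, $|G|$ denotes its number of edges. For $R\ge1$, the ball $\mathcal B_R$ is the subgraph of $\tau$ spanned by the vertices at graph distance at most $R$ from $r$. For $i\ge1$, $\mathcal A^i$ is the connected component containing $s_i$ of the graph obtained from $\tau$ by deleting the spine edges $\{s_{i-1},s_i\}$ and $\{s_i,s_{i+1}\}$ (i.e. $s_i$ together with the finite trees attached to it). The hull $\bar{\mathcal B}_R$ is the union of the spine path from $r$ to $s_R$ and $\mathcal A^1,\dots,\mathcal A^R$; thus $|\bar{\mathcal B}_R|=R+\sum_{i=1}^R|\mathcal A^i|$ and $\mathcal B_R\subseteq\bar{\mathcal B}_R$. A positive measurable function $L$ is slowly varying at infinity if $L(\lambda R)/L(R)\to1$ as $R\to\infty$ for every $\lambda>0$; $l$ is slowly varying at $0^+$ if $x\mapsto l(1/x)$ is slowly varying at infinity. The Hausdorff dimension $d_h$ of $\tau$ exists (strong sense) if there are $R_0>0$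 and functions $\underline L,\bar L$ slowly varying at infinity such that $R^{d_h}\underline L(R)<|\mathcal B_R|<R^{d_h}\bar L(R)$ for all $R>R_0$. The hull dimension $\bar d_h$ is defined in the same way with $\bar{\mathcal B}_R$ in place of $\mathcal B_R$. Consider simple random walk on $\tau$ (at each step it jumps to a uniformly chosen neighbour), started at $r$. For $x\in(0,1]$ let $Q_\tau(x)=\sum_{t\ge0}\mathbb P(\omega(t)=r\mid\omega(0)=r)(1-x)^{t/2}$ be the generating function of return probabilities. The spectral dimension $d_s$ of $\tau$ exists (strong sense) if there are $x_0\in(0,1)$ and functions $\underline l,\bar l$ slowly varying at $0^+$ with $x^{-1+d_s/2}\underline l(x)<Q_\tau(x)<x^{-1+d_s/2}\bar l(x)$ for all $x<x_0$. *)

theory Defs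
  imports "HOL-Analysis.Analysis"
begin

text \<open>A planar (ordered) rooted locally finite tree is encoded as a set of
vertices of type nat list: the root is [], the children of v are v@[0], v@[1], ...
(in planar order).  The edges are exactly the pairs (v, v@[i]).\<close>

definition planar_tree :: "nat list set \<Rightarrow> bool" where
  "planar_tree T \<longleftrightarrow>
     [] \<in> T \<and>
     (\<forall>v w. v @ w \<in> T \<longrightarrow> v \<in> T) \<and>
     (\<forall>v i. v @ [Suc i] \<in> T \<longrightarrow> v @ [i] \<in> T) \<and>
     (\<forall>v\<in>T. finite {i. v @ [i] \<in> T})"

text \<open>The class Gamma: root has degree one (its only child is [0]).\<close>
definition Gamma :: "nat list set \<Rightarrow> bool" where
  "Gamma T \<longleftrightarrow> planar_tree T \<and> [0] \<in> T \<and> [1] \<notin> T"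

text \<open>Infinite non-backtracking paths starting at the root: in a tree these
always move from a vertex to one of its children.\<close>
definition ray :: "nat list set \<Rightarrow> (nat \<Rightarrow> nat list) \<Rightarrow> bool" where
  "ray T f \<longleftrightarrow> f 0 = [] \<and> (\<forall>k. f (Suc k) \<in> T \<and> (\<exists>i. f (Suc k) = f k @ [i]))"

definition Gamma_S_inf :: "nat list set \<Rightarrow> bool" where
  "Gamma_S_inf T \<longleftrightarrow> Gamma T \<and> infinite T \<and> (\<exists>!f. ray T f)"

definition spine :: "nat list set \<Rightarrow> nat \<Rightarrow> nat list" where
  "spine T = (THE f. ray T f)"

text \<open>Edges (parent, child) of the ball B_R: both endpoints at distance \<le> R from the root
(the distance of v from the root is length v).\<close>
definition ball_edges :: "nat list set \<Rightarrow> nat \<Rightarrow> (nat list \<times> nat list) set" where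
  "ball_edges T R = {(u, v). u \<in> T \<and> v \<in> T \<and> (\<exists>i. v = u @ [i]) \<and> length u \<le> R \<and> length v \<le> R}"

definition ball_size :: "nat list set \<Rightarrow> nat \<Rightarrow> nat" where
  "ball_size T R = card (ball_edges T R)"

text \<open>Vertices of A^i: s_i together with the finite trees attached to it, i.e. the
descendants of s_i that are not descendants of s_(i+1).\<close>
definition A_verts :: "nat list set \<Rightarrow> nat \<Rightarrow> nat list set" where
  "A_verts T i = {v \<in> T. (\<exists>w. v = spine T i @ w) \<and> \<not> (\<exists>w. v = spine T (Suc i) @ w)}"

definition A_edges :: "nat list set \<Rightarrow> nat \<Rightarrow> (nat list \<times> nat list) set" where
  "A_edges T i = {(u, v). u \<in> A_verts T i \<and> v \<in> A_verts T i \<and> (\<exists>j. v = u @ [j])}"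

definition hull_size :: "nat list set \<Rightarrow> nat \<Rightarrow> nat" where
  "hull_size T R = R + (\<Sum>i=1..R. card (A_edges T i))"

definition nbrs :: "nat list set \<Rightarrow> nat list \<Rightarrow> nat list set" where
  "nbrs T v = {u. u \<in> T \<and> v \<in> T \<and> ((\<exists>i. u = v @ [i]) \<or> (\<exists>i. v = u @ [i]))}"

text \<open>walk_prob T t v = P(omega(t) = v | omega(0) = r) for simple random walk.\<close>
fun walk_prob :: "nat list set \<Rightarrow> nat \<Rightarrow> nat list \<Rightarrow> real" where
  "walk_prob T 0 v = (if v = [] then 1 else 0)"
| "walk_prob T (Suc t) v = (\<Sum>u\<in>nbrs T v. walk_prob T t u / real (card (nbrs T u)))"

definition Q_gen :: "nat list set \<Rightarrow> real \<Rightarrow> real" where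
  "Q_gen T x = (\<Sum>t. walk_prob T t [] * (1 - x) powr (real t / 2))"

definition slowly_varying :: "(real \<Rightarrow> real) \<Rightarrow> bool" where
  "slowly_varying L \<longleftrightarrow> (\<forall>x>0. L x > 0) \<and> L \<in> borel_measurable borel \<and>
     (\<forall>c>0. ((\<lambda>R. L (c * R) / L R) \<longlongrightarrow> 1) at_top)"

definition slowly_varying_at_0 :: "(real \<Rightarrow> real) \<Rightarrow> bool" where
  "slowly_varying_at_0 l \<longleftrightarrow> slowly_varying (\<lambda>x. l (1 / x))"

definition has_hausdorff_dim :: "nat list set \<Rightarrow> real \<Rightarrow> bool" where
  "has_hausdorff_dim T d \<longleftrightarrow> (\<exists>R0 Llo Lhi. R0 > 0 \<and> slowly_varying Llo \<and> slowly_varying Lhi \<and>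
     (\<forall>R::nat. real R > R0 \<longrightarrow>
        real R powr d * Llo (real R) < real (ball_size T R) \<and>
        real (ball_size T R) < real R powr d * Lhi (real R)))"

definition has_hull_dim :: "nat list set \<Rightarrow> real \<Rightarrow> bool" where
  "has_hull_dim T d \<longleftrightarrow> (\<exists>R0 Llo Lhi. R0 > 0 \<and> slowly_varying Llo \<and> slowly_varying Lhi \<and>
     (\<forall>R::nat. real R > R0 \<longrightarrow>
        real R powr d * Llo (real R) < real (hull_size T R) \<and>
        real (hull_size T R) < real R powr d * Lhi (real R)))"

definition has_spectral_dim :: "nat list set \<Rightarrow> real \<Rightarrow> bool" where
  "has_spectral_dim T d \<longleftrightarrow> (\<exists>x0 llo lhi. 0 < x0 \<and> x0 < 1 \<and>
     slowly_varying_at_0 llo \<and> slowly_varying_at_0 lhi \<and>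
     (\<forall>x. 0 < x \<and> x < x0 \<longrightarrow>
        x powr (-1 + d / 2) * llo x < Q_gen T x \<and>
        Q_gen T x < x powr (-1 + d / 2) * lhi x))"

end

theory Submission
  imports Defs
begin

definition deg :: "nat list set \<Rightarrow> nat list \<Rightarrow> nat" where
  "deg T v = card (nbrs T v)"

lemma nbrs_sym: "u \<in> nbrs T v \<longleftrightarrow> v \<in> nbrs T u"
  unfolding nbrs_def by auto

lemma nbrs_in_T: "u \<in> nbrs T v \<Longrightarrow> u \<in> T \<and> v \<in> T"
  unfolding nbrs_def by auto

lemma pt_prefix: "planar_tree T \<Longrightarrow> v @ w \<in> T \<Longrightarrow> v \<in> T"
  unfolding planar_tree_def by blast

lemma pt_root: "planar_tree T \<Longrightarrow> [] \<in> T"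
  unfolding planar_tree_def by blast

lemma pt_fin_children: "planar_tree T \<Longrightarrow> v \<in> T \<Longrightarrow> finite {i. v @ [i] \<in> T}"
  unfolding planar_tree_def by blast

lemma pt_down: "planar_tree T \<Longrightarrow> v @ [i] \<in> T \<Longrightarrow> j \<le> i \<Longrightarrow> v @ [j] \<in> T"
proof (induction i arbitrary: j)
  case 0 then show ?case by simp
next
  case (Suc i)
  then show ?case unfolding planar_tree_def
    by (metis le_Suc_eq)
qed

lemma nbrs_subset: "nbrs T v \<subseteq> (\<lambda>i. v @ [i]) ` {i. v @ [i] \<in> T} \<union> {butlast v}"
  unfolding nbrs_def by auto

lemma finite_nbrs: assumes "planar_tree T" shows "finite (nbrs T v)"
proof (cases "v \<in> T")
  case True
  then show ?thesis using nbrs_subset[of T v] pt_fin_children[OF assms True]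
    by (meson finite.emptyI finite.insertI finite_Un finite_imageI finite_subset)
next
  case False
  then have "nbrs T v = {}" unfolding nbrs_def by auto
  then show ?thesis by simp
qed

lemma gamma_single: assumes "Gamma T" "[i] \<in> T" shows "i = 0"
proof (rule ccontr)
  assume "i \<noteq> 0"
  then have "[1] \<in> T" using pt_down[of T "[]" i 1] assms unfolding Gamma_def by auto
  then show False using assms unfolding Gamma_def by auto
qed

lemma nbrs_root: assumes "Gamma T" shows "nbrs T [] = {[0]}"
  using assms gamma_single[OF assms] pt_root[of T] unfolding nbrs_def Gamma_def by auto

lemma deg_root: "Gamma T \<Longrightarrow> deg T [] = 1"
  using nbrs_root unfolding deg_def by simp

lemma nbrs_nonempty: assumes "Gamma T" "v \<in> T" shows "nbrs T v \<noteq> {}"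
proof (cases "v = []")
  case True then show ?thesis using nbrs_root[OF assms(1)] by simp
next
  case False
  then have "v = butlast v @ [last v]" by simp
  then have "butlast v \<in> nbrs T v" using assms pt_prefix[of T "butlast v" "[last v]"]
    unfolding nbrs_def Gamma_def by auto
  then show ?thesis by auto
qed

lemma deg_pos: "Gamma T \<Longrightarrow> v \<in> T \<Longrightarrow> deg T v > 0"
  unfolding deg_def using nbrs_nonempty finite_nbrs Gamma_def
  by (metis card_gt_0_iff)

definition ballV :: "nat list set \<Rightarrow> nat \<Rightarrow> nat list set" where
  "ballV T M = {v \<in> T. length v \<le> M}"

lemma finite_ballV: assumes "planar_tree T" shows "finite (ballV T M)"
proof (induction M)
  case 0
  have "ballV T 0 \<subseteq> {[]}" unfolding ballV_def by auto
  then show ?case using finite_subset by blast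
next
  case (Suc M)
  define C where "C = (\<Union>v\<in>ballV T M. (\<lambda>i. v @ [i]) ` {i. v @ [i] \<in> T})"
  have "ballV T (Suc M) \<subseteq> ballV T M \<union> C"
  proof
    fix w assume w: "w \<in> ballV T (Suc M)"
    show "w \<in> ballV T M \<union> C"
    proof (cases "length w \<le> M")
      case True then show ?thesis using w unfolding ballV_def by auto
    next
      case False
      then have ne: "w \<noteq> []" by auto
      then have wb: "w = butlast w @ [last w]" by simp
      have wT: "w \<in> T" using w unfolding ballV_def by simp
      have "butlast w \<in> T" using pt_prefix[OF assms, of "butlast w" "[last w]"] wb wT by simp
      moreover have "length (butlast w) \<le> M" using w unfolding ballV_def by auto
      ultimately have b: "butlast w \<in> ballV T M" unfolding ballV_def by simp
      have "last w \<in> {i. butlast w @ [i] \<in> T}" using wb wT by simp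
      then have "w \<in> (\<lambda>i. butlast w @ [i]) ` {i. butlast w @ [i] \<in> T}" using wb by (metis image_eqI)
      then have "w \<in> C" unfolding C_def using b by blast
      then show ?thesis by simp
    qed
  qed
  moreover have "finite C" unfolding C_def
  proof (rule finite_UN_I)
    show "finite (ballV T M)" by (rule Suc)
    fix v assume "v \<in> ballV T M"
    then have "v \<in> T" unfolding ballV_def by simp
    then show "finite ((\<lambda>i. v @ [i]) ` {i. v @ [i] \<in> T})" using pt_fin_children[OF assms] by simp
  qed
  ultimately show ?case using Suc finite_subset by blast
qed

lemma walk_nonneg: "walk_prob T t v \<ge> 0"
  by (induction t arbitrary: v) (auto intro!: sum_nonneg divide_nonneg_nonneg)

lemma walk_support: assumes "planar_tree T" shows "walk_prob T t v \<noteq> 0 \<Longrightarrow> v \<in> T \<and> length v \<le> t"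
proof (induction t arbitrary: v)
  case 0 then show ?case using pt_root[OF assms] by (auto split: if_splits)
next
  case (Suc t)
  have "(\<Sum>u\<in>nbrs T v. walk_prob T t u / real (card (nbrs T u))) \<noteq> 0" using Suc.prems by simp
  then obtain u where u: "u \<in> nbrs T v" "walk_prob T t u \<noteq> 0"
    using sum.neutral by force
  then have "length u \<le> t" using Suc.IH by auto
  moreover have "length v \<le> length u + 1" using u(1) unfolding nbrs_def by auto
  moreover have "v \<in> T" using u(1) nbrs_in_T by blast
  ultimately show ?case by simp
qed


lemma nbr_swap:
  assumes "finite S"
  shows "(\<Sum>v\<in>S. \<Sum>u\<in>{u\<in>S. u \<in> nbrs T v}. F v u) = (\<Sum>u\<in>S. \<Sum>v\<in>{v\<in>S. v \<in> nbrs T u}. F v u)"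
proof -
  have "(\<Sum>v\<in>S. \<Sum>u\<in>{u. u\<in>S \<and> u \<in> nbrs T v}. F v u) = (\<Sum>u\<in>S. \<Sum>v\<in>{v. v\<in>S \<and> u \<in> nbrs T v}. F v u)"
    by (rule sum.swap_restrict[OF assms assms])
  moreover have "\<And>u. {v. v\<in>S \<and> u \<in> nbrs T v} = {v\<in>S. v \<in> nbrs T u}" using nbrs_sym by blast
  ultimately show ?thesis by simp
qed

lemma walk_sum_le:
  assumes G: "Gamma T"
  shows "finite S \<Longrightarrow> (\<Sum>v\<in>S. walk_prob T t v) \<le> 1"
proof (induction t arbitrary: S)
  case 0
  have "(\<Sum>v\<in>S. walk_prob T 0 v) = (\<Sum>v\<in>S. if v = [] then 1 else 0)" by simp
  also have "\<dots> = (if [] \<in> S then 1 else 0)" using 0 by (simp add: sum.delta')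
  finally show ?case by simp
next
  case (Suc t)
  have pt: "planar_tree T" using G unfolding Gamma_def by simp
  define S' where "S' = (\<Union>v\<in>S. nbrs T v)"
  have fS': "finite S'" unfolding S'_def using Suc.prems finite_nbrs[OF pt] by blast
  have "(\<Sum>v\<in>S. walk_prob T (Suc t) v) = (\<Sum>v\<in>S. \<Sum>u\<in>nbrs T v. walk_prob T t u / real (card (nbrs T u)))"
    by simp
  also have "\<dots> = (\<Sum>v\<in>S. \<Sum>u\<in>{u. u\<in>S' \<and> v \<in> nbrs T u}. walk_prob T t u / real (card (nbrs T u)))"
  proof (rule sum.cong[OF refl])
    fix v assume "v \<in> S"
    then have "{u. u\<in>S' \<and> v \<in> nbrs T u} = nbrs T v" unfolding S'_def using nbrs_sym by blast
    then show "(\<Sum>u\<in>nbrs T v. walk_prob T t u / real (card (nbrs T u))) = (\<Sum>u\<in>{u. u\<in>S' \<and> v \<in> nbrs T u}. walk_prob T t u / real (card (nbrs T u)))"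
      by simp
  qed
  also have "\<dots> = (\<Sum>u\<in>S'. \<Sum>v\<in>{v. v\<in>S \<and> v \<in> nbrs T u}. walk_prob T t u / real (card (nbrs T u)))"
    by (rule sum.swap_restrict[OF Suc.prems fS'])
  also have "\<dots> \<le> (\<Sum>u\<in>S'. walk_prob T t u)"
  proof (rule sum_mono)
    fix u assume "u \<in> S'"
    have sub: "{v. v\<in>S \<and> v \<in> nbrs T u} \<subseteq> nbrs T u" by blast
    have c: "card {v. v\<in>S \<and> v \<in> nbrs T u} \<le> card (nbrs T u)"
      by (rule card_mono[OF finite_nbrs[OF pt] sub])
    have "(\<Sum>v\<in>{v. v\<in>S \<and> v \<in> nbrs T u}. walk_prob T t u / real (card (nbrs T u)))
        = real (card {v. v\<in>S \<and> v \<in> nbrs T u}) * (walk_prob T t u / real (card (nbrs T u)))" by simp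
    also have "\<dots> \<le> walk_prob T t u"
    proof (cases "card (nbrs T u) = 0")
      case True then show ?thesis using walk_nonneg[of T t u] by simp
    next
      case False
      then have "real (card {v. v\<in>S \<and> v \<in> nbrs T u}) / real (card (nbrs T u)) \<le> 1" using c by simp
      then have "real (card {v. v\<in>S \<and> v \<in> nbrs T u}) / real (card (nbrs T u)) * walk_prob T t u \<le> 1 * walk_prob T t u"
        using walk_nonneg[of T t u] by (intro mult_right_mono) auto
      then show ?thesis by simp
    qed
    finally show "(\<Sum>v\<in>{v. v\<in>S \<and> v \<in> nbrs T u}. walk_prob T t u / real (card (nbrs T u))) \<le> walk_prob T t u" .
  qed
  also have "\<dots> \<le> 1" by (rule Suc.IH[OF fS'])
  finally show ?case .
qed

lemma walk_le1: "Gamma T \<Longrightarrow> walk_prob T t v \<le> 1"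
  using walk_sum_le[of T "{v}" t] by simp

definition gN :: "nat list set \<Rightarrow> real \<Rightarrow> nat \<Rightarrow> nat list \<Rightarrow> real" where
  "gN T z N v = (\<Sum>t\<le>N. walk_prob T t v * z ^ t)"

definition hN :: "nat list set \<Rightarrow> real \<Rightarrow> nat \<Rightarrow> nat list \<Rightarrow> real" where
  "hN T z N v = gN T z N v / real (card (nbrs T v))"

lemma gN_nonneg: "z \<ge> 0 \<Longrightarrow> gN T z N v \<ge> 0"
  unfolding gN_def using walk_nonneg by (auto intro!: sum_nonneg)

lemma hN_nonneg: "z \<ge> 0 \<Longrightarrow> hN T z N v \<ge> 0"
  unfolding hN_def using gN_nonneg by simp

lemma gN_support: assumes "planar_tree T" "gN T z N v \<noteq> 0" shows "v \<in> T \<and> length v \<le> N"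
proof -
  obtain t where "t \<le> N" "walk_prob T t v * z ^ t \<noteq> 0" using assms(2) unfolding gN_def
    by (metis (no_types, lifting) atMost_iff sum.neutral)
  then show ?thesis using walk_support[OF assms(1), of t v] by auto
qed

lemma hN_support: assumes "planar_tree T" "hN T z N v \<noteq> 0" shows "v \<in> T \<and> length v \<le> N"
  using assms gN_support unfolding hN_def by fastforce

lemma card_hN: assumes "Gamma T" shows "real (card (nbrs T v)) * hN T z N v = gN T z N v"
proof (cases "v \<in> T")
  case True
  then have "card (nbrs T v) > 0" using deg_pos[OF assms] unfolding deg_def by simp
  then show ?thesis unfolding hN_def by simp
next
  case False
  then have "gN T z N v = 0" using gN_support assms unfolding Gamma_def by blast
  then show ?thesis unfolding hN_def by simp
qed

lemma hN_eq: assumes "Gamma T"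
  shows "real (card (nbrs T v)) * hN T z N v - z * (\<Sum>u\<in>nbrs T v. hN T z N u)
     = (if v = [] then 1 else 0) - z ^ (Suc N) * walk_prob T (Suc N) v"
proof -
  have "(\<Sum>u\<in>nbrs T v. hN T z N u) = (\<Sum>u\<in>nbrs T v. \<Sum>t\<le>N. walk_prob T t u * z ^ t / real (card (nbrs T u)))"
    unfolding hN_def gN_def by (simp add: sum_divide_distrib)
  also have "\<dots> = (\<Sum>t\<le>N. \<Sum>u\<in>nbrs T v. walk_prob T t u * z ^ t / real (card (nbrs T u)))"
    by (rule sum.swap)
  also have "\<dots> = (\<Sum>t\<le>N. z ^ t * walk_prob T (Suc t) v)"
    by (simp add: sum_distrib_left mult.commute)
  finally have e: "z * (\<Sum>u\<in>nbrs T v. hN T z N u) = (\<Sum>t\<le>N. walk_prob T (Suc t) v * z ^ Suc t)"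
    by (simp add: sum_distrib_left mult.commute mult.left_commute)
  have "real (card (nbrs T v)) * hN T z N v - z * (\<Sum>u\<in>nbrs T v. hN T z N u)
     = (\<Sum>t<Suc N. walk_prob T t v * z ^ t - walk_prob T (Suc t) v * z ^ Suc t)"
    unfolding card_hN[OF assms] e gN_def by (simp add: lessThan_Suc_atMost sum_subtractf)
  also have "\<dots> = walk_prob T 0 v * z ^ 0 - walk_prob T (Suc N) v * z ^ Suc N"
    by (rule sum_lessThan_telescope')
  finally show ?thesis by simp
qed


definition BL :: "nat list set \<Rightarrow> real \<Rightarrow> nat list set \<Rightarrow> (nat list \<Rightarrow> real) \<Rightarrow> (nat list \<Rightarrow> real) \<Rightarrow> real" where
  "BL T z S f g = (\<Sum>v\<in>S. f v * (real (card (nbrs T v)) * g v - z * (\<Sum>u\<in>nbrs T v. g u)))"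

definition good :: "nat list set \<Rightarrow> nat list set \<Rightarrow> (nat list \<Rightarrow> real) \<Rightarrow> bool" where
  "good T S f \<longleftrightarrow> (\<forall>v. f v \<noteq> 0 \<longrightarrow> v \<in> S \<and> nbrs T v \<subseteq> S)"

lemma restrict_nbrs:
  assumes "good T S f"
  shows "(\<Sum>v\<in>S. f v * (\<Sum>u\<in>nbrs T v. G v u)) = (\<Sum>v\<in>S. \<Sum>u\<in>{u\<in>S. u \<in> nbrs T v}. f v * G v u)"
proof (rule sum.cong[OF refl])
  fix v assume "v \<in> S"
  show "f v * (\<Sum>u\<in>nbrs T v. G v u) = (\<Sum>u\<in>{u\<in>S. u \<in> nbrs T v}. f v * G v u)"
  proof (cases "f v = 0")
    case True then show ?thesis by simp
  next
    case False
    then have "{u\<in>S. u \<in> nbrs T v} = nbrs T v" using assms unfolding good_def by blast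
    then show ?thesis by (simp add: sum_distrib_left)
  qed
qed

lemma cross_sym:
  assumes "finite S" "good T S f" "good T S g"
  shows "(\<Sum>v\<in>S. f v * (\<Sum>u\<in>nbrs T v. g u)) = (\<Sum>v\<in>S. g v * (\<Sum>u\<in>nbrs T v. f u))"
proof -
  have "(\<Sum>v\<in>S. f v * (\<Sum>u\<in>nbrs T v. g u)) = (\<Sum>v\<in>S. \<Sum>u\<in>{u\<in>S. u \<in> nbrs T v}. f v * g u)"
    by (rule restrict_nbrs[OF assms(2)])
  also have "\<dots> = (\<Sum>u\<in>S. \<Sum>v\<in>{v\<in>S. v \<in> nbrs T u}. f v * g u)"
    by (rule nbr_swap[OF assms(1)])
  also have "\<dots> = (\<Sum>u\<in>S. \<Sum>v\<in>{v\<in>S. v \<in> nbrs T u}. g u * f v)"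
    by (simp add: mult.commute)
  also have "\<dots> = (\<Sum>v\<in>S. g v * (\<Sum>u\<in>nbrs T v. f u))"
    by (rule restrict_nbrs[OF assms(3), symmetric])
  finally show ?thesis .
qed

lemma BL_sym:
  assumes "finite S" "good T S f" "good T S g"
  shows "BL T z S f g = BL T z S g f"
proof -
  have "BL T z S f g = (\<Sum>v\<in>S. real (card (nbrs T v)) * f v * g v) - z * (\<Sum>v\<in>S. f v * (\<Sum>u\<in>nbrs T v. g u))"
    unfolding BL_def by (simp add: algebra_simps sum_subtractf sum_distrib_left)
  also have "\<dots> = (\<Sum>v\<in>S. real (card (nbrs T v)) * g v * f v) - z * (\<Sum>v\<in>S. g v * (\<Sum>u\<in>nbrs T v. f u))"
    using cross_sym[OF assms] by (simp add: mult.commute mult.left_commute)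
  also have "\<dots> = BL T z S g f"
    unfolding BL_def by (simp add: algebra_simps sum_subtractf sum_distrib_left)
  finally show ?thesis .
qed

lemma sq_nbr_sum:
  assumes "finite S" "good T S f" "planar_tree T"
  shows "(\<Sum>v\<in>S. \<Sum>u\<in>nbrs T v. (f u)\<^sup>2) = (\<Sum>v\<in>S. real (card (nbrs T v)) * (f v)\<^sup>2)"
proof -
  have "(\<Sum>v\<in>S. \<Sum>u\<in>nbrs T v. (f u)\<^sup>2) = (\<Sum>v\<in>S. \<Sum>u\<in>{u\<in>S. u \<in> nbrs T v}. (f u)\<^sup>2)"
  proof (rule sum.cong[OF refl])
    fix v assume "v \<in> S"
    show "(\<Sum>u\<in>nbrs T v. (f u)\<^sup>2) = (\<Sum>u\<in>{u\<in>S. u \<in> nbrs T v}. (f u)\<^sup>2)"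
    proof (rule sum.mono_neutral_right)
      show "finite (nbrs T v)" by (rule finite_nbrs[OF assms(3)])
      show "{u \<in> S. u \<in> nbrs T v} \<subseteq> nbrs T v" by blast
      show "\<forall>i\<in>nbrs T v - {u \<in> S. u \<in> nbrs T v}. (f i)\<^sup>2 = 0"
        using assms(2) unfolding good_def by auto
    qed
  qed
  also have "\<dots> = (\<Sum>u\<in>S. \<Sum>v\<in>{v\<in>S. v \<in> nbrs T u}. (f u)\<^sup>2)"
    by (rule nbr_swap[OF assms(1)])
  also have "\<dots> = (\<Sum>u\<in>S. real (card (nbrs T u)) * (f u)\<^sup>2)"
  proof (rule sum.cong[OF refl])
    fix u assume "u \<in> S"
    show "(\<Sum>v\<in>{v\<in>S. v \<in> nbrs T u}. (f u)\<^sup>2) = real (card (nbrs T u)) * (f u)\<^sup>2"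
    proof (cases "f u = 0")
      case True then show ?thesis by simp
    next
      case False
      then have "{v\<in>S. v \<in> nbrs T u} = nbrs T u" using assms(2) unfolding good_def by blast
      then show ?thesis by simp
    qed
  qed
  finally show ?thesis .
qed

lemma energy:
  assumes "finite S" "good T S f" "planar_tree T"
  shows "BL T z S f f = (1 - z) * (\<Sum>v\<in>S. real (card (nbrs T v)) * (f v)\<^sup>2)
            + z / 2 * (\<Sum>v\<in>S. \<Sum>u\<in>nbrs T v. (f u - f v)\<^sup>2)"
proof -
  have "(\<Sum>v\<in>S. \<Sum>u\<in>nbrs T v. (f u - f v)\<^sup>2)
      = (\<Sum>v\<in>S. \<Sum>u\<in>nbrs T v. (f u)\<^sup>2) - 2 * (\<Sum>v\<in>S. f v * (\<Sum>u\<in>nbrs T v. f u))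
        + (\<Sum>v\<in>S. real (card (nbrs T v)) * (f v)\<^sup>2)"
    by (simp add: power2_diff sum_subtractf sum.distrib sum_distrib_left algebra_simps)
  also have "\<dots> = 2 * (\<Sum>v\<in>S. real (card (nbrs T v)) * (f v)\<^sup>2) - 2 * (\<Sum>v\<in>S. f v * (\<Sum>u\<in>nbrs T v. f u))"
    using sq_nbr_sum[OF assms] by simp
  finally have e: "(\<Sum>v\<in>S. \<Sum>u\<in>nbrs T v. (f u - f v)\<^sup>2) = 2 * (\<Sum>v\<in>S. real (card (nbrs T v)) * (f v)\<^sup>2) - 2 * (\<Sum>v\<in>S. f v * (\<Sum>u\<in>nbrs T v. f u))" .
  have b: "BL T z S f f = (\<Sum>v\<in>S. real (card (nbrs T v)) * (f v)\<^sup>2) - z * (\<Sum>v\<in>S. f v * (\<Sum>u\<in>nbrs T v. f u))"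
    unfolding BL_def by (simp add: algebra_simps sum_subtractf sum_distrib_left power2_eq_square)
  show ?thesis unfolding b e by (simp add: algebra_simps)
qed

lemma energy_nonneg:
  assumes "finite S" "good T S f" "planar_tree T" "0 \<le> z" "z \<le> 1"
  shows "BL T z S f f \<ge> 0"
  unfolding energy[OF assms(1-3)] using assms(4,5)
  by (intro add_nonneg_nonneg mult_nonneg_nonneg sum_nonneg) auto

lemma good_comb: "good T S f \<Longrightarrow> good T S g \<Longrightarrow> good T S (\<lambda>v. g v - c * f v)"
  unfolding good_def by (metis diff_zero mult_zero_right)

lemma BL_lin1: "BL T z S (\<lambda>v. g v - c * f v) h = BL T z S g h - c * BL T z S f h"
proof -
  have "BL T z S (\<lambda>v. g v - c * f v) h = (\<Sum>v\<in>S. g v * (real (card (nbrs T v)) * h v - z * (\<Sum>u\<in>nbrs T v. h u))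
     - c * (f v * (real (card (nbrs T v)) * h v - z * (\<Sum>u\<in>nbrs T v. h u))))"
    unfolding BL_def by (rule sum.cong) (auto simp: left_diff_distrib)
  then show ?thesis unfolding BL_def by (simp add: sum_subtractf sum_distrib_left)
qed

lemma BL_lin2: "BL T z S h (\<lambda>v. g v - c * f v) = BL T z S h g - c * BL T z S h f"
proof -
  have "BL T z S h (\<lambda>v. g v - c * f v) = (\<Sum>v\<in>S. h v * (real (card (nbrs T v)) * g v - z * (\<Sum>u\<in>nbrs T v. g u))
     - c * (h v * (real (card (nbrs T v)) * f v - z * (\<Sum>u\<in>nbrs T v. f u))))"
    unfolding BL_def by (rule sum.cong) (auto simp: sum_subtractf sum_distrib_left algebra_simps)
  then show ?thesis unfolding BL_def by (simp add: sum_subtractf sum_distrib_left)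
qed

lemma BL_CS:
  assumes "finite S" "good T S f" "good T S g" "planar_tree T" "0 \<le> z" "z \<le> 1" "BL T z S f f > 0"
  shows "(BL T z S f g)\<^sup>2 \<le> BL T z S f f * BL T z S g g"
proof -
  define c where "c = BL T z S f g / BL T z S f f"
  have "0 \<le> BL T z S (\<lambda>v. g v - c * f v) (\<lambda>v. g v - c * f v)"
    by (rule energy_nonneg[OF assms(1) good_comb[OF assms(2,3)] assms(4-6)])
  also have "\<dots> = BL T z S g g - 2 * c * BL T z S f g + c * c * BL T z S f f"
    unfolding BL_lin1 BL_lin2 using BL_sym[OF assms(1-3), of z] by (simp add: algebra_simps)
  also have "\<dots> = BL T z S g g - (BL T z S f g)\<^sup>2 / BL T z S f f"
    using assms(7) unfolding c_def by (simp add: field_simps power2_eq_square)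
  finally have "(BL T z S f g)\<^sup>2 / BL T z S f f \<le> BL T z S g g" by simp
  then show ?thesis using assms(7) by (simp add: pos_divide_le_eq mult.commute)
qed


lemma good_hN: assumes "planar_tree T" "N < M" shows "good T (ballV T M) (hN T z N)"
  unfolding good_def
proof (intro allI impI conjI)
  fix v assume "hN T z N v \<noteq> 0"
  then have v: "v \<in> T" "length v \<le> N" using hN_support[OF assms(1)] by auto
  then show "v \<in> ballV T M" using assms(2) unfolding ballV_def by simp
  show "nbrs T v \<subseteq> ballV T M"
  proof
    fix u assume "u \<in> nbrs T v"
    then have "u \<in> T" "length u \<le> length v + 1" unfolding nbrs_def by auto
    then show "u \<in> ballV T M" using v assms(2) unfolding ballV_def by simp
  qed
qed

lemma BL_hN:
  assumes "Gamma T" "finite S" "[] \<in> S"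
  shows "BL T z S f (hN T z N) = f [] - z ^ Suc N * (\<Sum>v\<in>S. f v * walk_prob T (Suc N) v)"
proof -
  have "BL T z S f (hN T z N) = (\<Sum>v\<in>S. f v * ((if v = [] then 1 else 0) - z ^ Suc N * walk_prob T (Suc N) v))"
    unfolding BL_def using hN_eq[OF assms(1)] by simp
  also have "\<dots> = (\<Sum>v\<in>S. (if v = [] then f v else 0)) - (\<Sum>v\<in>S. z ^ Suc N * (f v * walk_prob T (Suc N) v))"
  proof -
    define p where "p = walk_prob T (Suc N)"
    define c where "c = z ^ Suc N"
    have "(\<Sum>v\<in>S. f v * ((if v = [] then 1 else 0) - c * p v)) = (\<Sum>v\<in>S. (if v = [] then f v else 0) - c * (f v * p v))"
      by (rule sum.cong) (auto simp: algebra_simps)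
    then show ?thesis unfolding p_def c_def by (simp only: sum_subtractf)
  qed
  also have "\<dots> = f [] - z ^ Suc N * (\<Sum>v\<in>S. f v * walk_prob T (Suc N) v)"
    using assms(2,3) by (simp add: sum.delta' sum_distrib_left)
  finally show ?thesis .
qed

lemma hN_root_ge1: assumes "Gamma T" "0 \<le> z" shows "hN T z N [] \<ge> 1"
proof -
  have "gN T z N [] \<ge> walk_prob T 0 [] * z ^ 0" unfolding gN_def
    by (rule member_le_sum) (auto intro!: mult_nonneg_nonneg walk_nonneg assms(2) zero_le_power)
  then show ?thesis unfolding hN_def using deg_root[OF assms(1)] unfolding deg_def by simp
qed

lemma energy_hN_le_gen: assumes "Gamma T" "0 \<le> z" "finite S" "[] \<in> S"
  shows "BL T z S (hN T z N) (hN T z N) \<le> hN T z N []"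
proof -
  have "BL T z S (hN T z N) (hN T z N) = hN T z N [] - z ^ Suc N * (\<Sum>v\<in>S. hN T z N v * walk_prob T (Suc N) v)"
    using BL_hN[OF assms(1,3,4)] by simp
  moreover have "(\<Sum>v\<in>S. hN T z N v * walk_prob T (Suc N) v) \<ge> 0"
    by (intro sum_nonneg mult_nonneg_nonneg hN_nonneg walk_nonneg assms(2))
  ultimately show ?thesis using assms(2) by (simp add: mult_nonneg_nonneg)
qed

lemma energy_hN_le: assumes "Gamma T" "0 \<le> z" "N < M"
  shows "BL T z (ballV T M) (hN T z N) (hN T z N) \<le> hN T z N []"
proof -
  have pt: "planar_tree T" using assms(1) unfolding Gamma_def by simp
  have "[] \<in> ballV T M" using pt_root[OF pt] unfolding ballV_def by simp
  then show ?thesis using energy_hN_le_gen[OF assms(1,2) finite_ballV[OF pt]] by simp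
qed

lemma path_energy:
  assumes pt: "planar_tree T" and fS: "finite S" and v: "v \<in> T" and sub: "\<And>j. j < length v \<Longrightarrow> take j v \<in> S"
  shows "(\<phi> v - \<phi> [])\<^sup>2 \<le> real (length v) * (\<Sum>w\<in>S. \<Sum>u\<in>nbrs T w. (\<phi> u - \<phi> w)\<^sup>2)"
proof -
  define k where "k = length v"
  define d where "d j = \<phi> (take (Suc j) v) - \<phi> (take j v)" for j
  have tel: "(\<Sum>j<k. d j) = \<phi> v - \<phi> []"
    unfolding d_def using sum_lessThan_telescope[of "\<lambda>j. \<phi> (take j v)" k] k_def by simp
  have cs: "(\<Sum>j<k. d j)\<^sup>2 \<le> (\<Sum>j<k. (d j)\<^sup>2) * real k"
    using sum_squared_le_sum_of_squares[of d "{..<k}"] by simp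
  define G where "G w = (\<Sum>u\<in>nbrs T w. (\<phi> u - \<phi> w)\<^sup>2)" for w
  have "(\<Sum>j<k. (d j)\<^sup>2) \<le> (\<Sum>j<k. G (take j v))"
  proof (rule sum_mono)
    fix j assume j: "j \<in> {..<k}"
    then have jl: "j < length v" unfolding k_def by simp
    have ts: "take (Suc j) v = take j v @ [v ! j]" by (rule take_Suc_conv_app_nth[OF jl])
    have "take (Suc j) v \<in> T" using pt_prefix[OF pt, of "take (Suc j) v" "drop (Suc j) v"] v by simp
    then have "take (Suc j) v \<in> nbrs T (take j v)" using ts pt_prefix[OF pt, of "take j v" "[v!j]"]
      unfolding nbrs_def by auto
    then show "(d j)\<^sup>2 \<le> G (take j v)" unfolding G_def d_def
      by (intro member_le_sum) (auto simp: finite_nbrs[OF pt])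
  qed
  also have "\<dots> = (\<Sum>w\<in>(\<lambda>j. take j v) ` {..<k}. G w)"
  proof -
    have inj: "inj_on (\<lambda>j. take j v) {..<k}"
    proof (rule inj_onI)
      fix i j assume ij: "i \<in> {..<k}" "j \<in> {..<k}" "take i v = take j v"
      then have "length (take i v) = length (take j v)" by simp
      then show "i = j" using ij(1,2) unfolding k_def by simp
    qed
    show ?thesis using sum.reindex[OF inj, of G] by simp
  qed
  also have "\<dots> \<le> (\<Sum>w\<in>S. G w)"
    by (rule sum_mono2[OF fS]) (auto simp: G_def k_def intro!: sub sum_nonneg)
  finally have "(\<Sum>j<k. (d j)\<^sup>2) \<le> (\<Sum>w\<in>S. G w)" .
  then have "(\<Sum>j<k. (d j)\<^sup>2) * real k \<le> (\<Sum>w\<in>S. G w) * real k" by (simp add: mult_right_mono)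
  then show ?thesis using cs tel unfolding G_def k_def by (simp add: mult.commute)
qed

lemma QA_core:
  assumes G: "Gamma T" and z: "0 < z" "z < 1" and R: "R \<ge> 1"
  shows "hN T z N [] \<le> max (8 * real R / z) (4 / ((1 - z) * real (card (ballV T R))))"
proof -
  have pt: "planar_tree T" using G unfolding Gamma_def by simp
  define M where "M = N + R + 1"
  define S where "S = ballV T M"
  define \<phi> where "\<phi> = hN T z N"
  define a where "a = \<phi> []"
  have fS: "finite S" unfolding S_def by (rule finite_ballV[OF pt])
  have gd: "good T S \<phi>" unfolding S_def \<phi>_def by (rule good_hN[OF pt]) (simp add: M_def)
  have a1: "a \<ge> 1" unfolding a_def \<phi>_def using hN_root_ge1[OF G] z by simp
  have Ele: "BL T z S \<phi> \<phi> \<le> a" unfolding S_def \<phi>_def a_def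
    by (rule energy_hN_le[OF G]) (use z in \<open>auto simp: M_def\<close>)
  have En: "BL T z S \<phi> \<phi> = (1 - z) * (\<Sum>v\<in>S. real (card (nbrs T v)) * (\<phi> v)\<^sup>2)
            + z / 2 * (\<Sum>v\<in>S. \<Sum>u\<in>nbrs T v. (\<phi> u - \<phi> v)\<^sup>2)"
    by (rule energy[OF fS gd pt])
  have s1: "(\<Sum>v\<in>S. real (card (nbrs T v)) * (\<phi> v)\<^sup>2) \<ge> 0" by (auto intro!: sum_nonneg)
  have s2: "(\<Sum>v\<in>S. \<Sum>u\<in>nbrs T v. (\<phi> u - \<phi> v)\<^sup>2) \<ge> 0" by (auto intro!: sum_nonneg)
  have sub: "ballV T R \<subseteq> S" unfolding S_def M_def ballV_def by auto
  show ?thesis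
  proof (cases "\<forall>v\<in>ballV T R. \<phi> v \<ge> a / 2")
    case True
    have cpos: "card (ballV T R) > 0"
      using finite_ballV[OF pt, of R] pt_root[OF pt] unfolding ballV_def by (auto simp: card_gt_0_iff)
    have "(\<Sum>v\<in>ballV T R. a\<^sup>2 / 4) \<le> (\<Sum>v\<in>ballV T R. real (card (nbrs T v)) * (\<phi> v)\<^sup>2)"
    proof (rule sum_mono)
      fix v assume v: "v \<in> ballV T R"
      then have "card (nbrs T v) \<ge> 1" using deg_pos[OF G] unfolding deg_def ballV_def by fastforce
      moreover have "(a/2)\<^sup>2 \<le> (\<phi> v)\<^sup>2" using True v a1 by (intro power_mono) auto
      moreover have "(\<phi> v)\<^sup>2 \<ge> 0" by simp
      ultimately have "1 * (a/2)\<^sup>2 \<le> real (card (nbrs T v)) * (\<phi> v)\<^sup>2"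
        by (intro mult_mono) auto
      then show "a\<^sup>2 / 4 \<le> real (card (nbrs T v)) * (\<phi> v)\<^sup>2" by (simp add: power_divide)
    qed
    also have "\<dots> \<le> (\<Sum>v\<in>S. real (card (nbrs T v)) * (\<phi> v)\<^sup>2)"
      by (rule sum_mono2[OF fS sub]) auto
    finally have "real (card (ballV T R)) * a\<^sup>2 / 4 \<le> (\<Sum>v\<in>S. real (card (nbrs T v)) * (\<phi> v)\<^sup>2)" by simp
    then have "(1 - z) * (real (card (ballV T R)) * a\<^sup>2 / 4) \<le> (1 - z) * (\<Sum>v\<in>S. real (card (nbrs T v)) * (\<phi> v)\<^sup>2)"
      using z by (intro mult_left_mono) auto
    also have "\<dots> \<le> a"
    proof -
      have "z / 2 * (\<Sum>v\<in>S. \<Sum>u\<in>nbrs T v. (\<phi> u - \<phi> v)\<^sup>2) \<ge> 0" using s2 z by simp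
      then show ?thesis using Ele En by linarith
    qed
    finally have "((1 - z) * real (card (ballV T R))) * a * a \<le> 4 * a" by (simp add: power2_eq_square algebra_simps)
    then have "((1 - z) * real (card (ballV T R))) * a \<le> 4" using a1 by (simp add: mult.commute mult.left_commute)
    then have "a \<le> 4 / ((1 - z) * real (card (ballV T R)))" using z cpos by (simp add: field_simps)
    then show ?thesis unfolding a_def \<phi>_def by simp
  next
    case False
    then obtain v where v: "v \<in> ballV T R" "\<phi> v < a / 2" by auto
    have vT: "v \<in> T" and vl: "length v \<le> R" using v unfolding ballV_def by auto
    have pos: "\<phi> v \<ge> 0" unfolding \<phi>_def using hN_nonneg z by simp
    have "a/2 \<le> a - \<phi> v" using v by simp
    then have "(a/2)\<^sup>2 \<le> (a - \<phi> v)\<^sup>2" using a1 by (intro power_mono) auto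
    then have "(a/2)\<^sup>2 \<le> (\<phi> v - \<phi> [])\<^sup>2" unfolding a_def by (simp add: power2_commute)
    also have "\<dots> \<le> real (length v) * (\<Sum>w\<in>S. \<Sum>u\<in>nbrs T w. (\<phi> u - \<phi> w)\<^sup>2)"
    proof (rule path_energy[OF pt fS vT])
      fix j assume "j < length v"
      then show "take j v \<in> S" using sub pt_prefix[OF pt, of "take j v" "drop j v"] vT vl
        unfolding ballV_def by auto
    qed
    also have "\<dots> \<le> real R * (\<Sum>w\<in>S. \<Sum>u\<in>nbrs T w. (\<phi> u - \<phi> w)\<^sup>2)"
      using vl s2 by (intro mult_right_mono) auto
    finally have p: "a * a / 4 \<le> real R * (\<Sum>w\<in>S. \<Sum>u\<in>nbrs T w. (\<phi> u - \<phi> w)\<^sup>2)" by (simp add: power2_eq_square)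
    define Y where "Y = (\<Sum>w\<in>S. \<Sum>u\<in>nbrs T w. (\<phi> u - \<phi> w)\<^sup>2)"
    have "(1 - z) * (\<Sum>v\<in>S. real (card (nbrs T v)) * (\<phi> v)\<^sup>2) \<ge> 0" using s1 z by simp
    then have zy: "z / 2 * Y \<le> a" using Ele En unfolding Y_def by linarith
    have "z * (a * a / 4) \<le> z * (real R * Y)" using p z unfolding Y_def by (intro mult_left_mono) auto
    moreover have "real R * (z / 2 * Y) \<le> real R * a" using zy by (intro mult_left_mono) auto
    ultimately have "z * (a * a) \<le> 8 * real R * a" by (simp add: algebra_simps)
    then have "z * a \<le> 8 * real R" using a1 by (simp add: mult.commute mult.left_commute)
    then have "a \<le> 8 * real R / z" using z by (simp add: field_simps)
    then show ?thesis unfolding a_def \<phi>_def by simp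
  qed
qed


lemma powr_sqrt_pow: assumes "0 < x" "x < 1" shows "(1 - x) powr (real t / 2) = sqrt (1 - x) ^ t"
proof -
  have "(1 - x) powr (real t / 2) = ((1 - x) powr (1/2)) powr real t"
    by (simp add: powr_powr)
  also have "\<dots> = sqrt (1 - x) powr real t" using assms by (simp add: powr_half_sqrt)
  also have "\<dots> = sqrt (1 - x) ^ t" using assms by (simp add: powr_realpow)
  finally show ?thesis .
qed

lemma Q_series:
  assumes G: "Gamma T" and x: "0 < x" "x < 1"
  shows "Q_gen T x = (\<Sum>t. walk_prob T t [] * sqrt (1 - x) ^ t)"
    and "summable (\<lambda>t. walk_prob T t [] * sqrt (1 - x) ^ t)"
proof -
  show "Q_gen T x = (\<Sum>t. walk_prob T t [] * sqrt (1 - x) ^ t)"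
    unfolding Q_gen_def using powr_sqrt_pow[OF x] by simp
  have z: "0 \<le> sqrt (1 - x)" "sqrt (1 - x) < 1" using x by auto
  show "summable (\<lambda>t. walk_prob T t [] * sqrt (1 - x) ^ t)"
  proof (rule summable_comparison_test'[of "\<lambda>t. sqrt (1 - x) ^ t"])
    show "summable (\<lambda>t. sqrt (1 - x) ^ t)" using z by (simp add: summable_geometric)
    fix n
    show "norm (walk_prob T n [] * sqrt (1 - x) ^ n) \<le> sqrt (1 - x) ^ n"
      using walk_le1[OF G] walk_nonneg[of T n "[]"] z
      by (simp add: abs_mult mult_left_le_one_le)
  qed
qed

lemma hN_root_eq: "Gamma T \<Longrightarrow> hN T z N [] = (\<Sum>t<Suc N. walk_prob T t [] * z ^ t)"
  unfolding hN_def gN_def using deg_root unfolding deg_def by (simp add: lessThan_Suc_atMost)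

lemma hN_le_Q: assumes G: "Gamma T" and x: "0 < x" "x < 1"
  shows "hN T (sqrt (1 - x)) N [] \<le> Q_gen T x"
  unfolding Q_series(1)[OF assms] hN_root_eq[OF G]
  by (rule sum_le_suminf[OF Q_series(2)[OF assms]]) (use x in \<open>auto intro!: mult_nonneg_nonneg walk_nonneg zero_le_power\<close>)

lemma Q_le: assumes G: "Gamma T" and x: "0 < x" "x < 1" and B: "\<And>N. hN T (sqrt (1 - x)) N [] \<le> B"
  shows "Q_gen T x \<le> B"
  unfolding Q_series(1)[OF G x]
proof (rule suminf_le_const[OF Q_series(2)[OF G x]])
  fix n
  show "(\<Sum>t<n. walk_prob T t [] * sqrt (1 - x) ^ t) \<le> B"
  proof (cases n)
    case 0
    then show ?thesis using B[of 0] hN_root_ge1[OF G, of "sqrt (1-x)" 0] x by simp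
  next
    case (Suc N)
    then show ?thesis using B[of N] hN_root_eq[OF G] by simp
  qed
qed

lemma QA:
  assumes G: "Gamma T" and x: "0 < x" "x \<le> 3/4" and R: "R \<ge> 1"
  shows "Q_gen T x \<le> max (16 * real R) (8 / (x * real (card (ballV T R))))"
proof (rule Q_le[OF G x(1)])
  show "x < 1" using x by simp
  fix N
  define z where "z = sqrt (1 - x)"
  have pt: "planar_tree T" using G unfolding Gamma_def by simp
  have cpos: "real (card (ballV T R)) > 0"
    using finite_ballV[OF pt, of R] pt_root[OF pt] unfolding ballV_def by (auto simp: card_gt_0_iff)
  have z1: "z < 1" "z > 0" unfolding z_def using x by auto
  have zh: "z \<ge> 1/2" unfolding z_def using x real_le_rsqrt[of "1/2" "1-x"] by (simp add: power2_eq_square)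
  have zz: "z * z = 1 - x" unfolding z_def using x by simp
  have omz: "1 - z \<ge> x / 2"
  proof -
    have "x = (1 - z) * (1 + z)" using zz by (simp add: algebra_simps)
    also have "\<dots> \<le> (1 - z) * 2" using z1 by (intro mult_left_mono) auto
    finally show ?thesis by simp
  qed
  have "hN T z N [] \<le> max (8 * real R / z) (4 / ((1 - z) * real (card (ballV T R))))"
    by (rule QA_core[OF G z1(2) z1(1) R])
  also have "\<dots> \<le> max (16 * real R) (8 / (x * real (card (ballV T R))))"
  proof (rule max.mono)
    have "real R * 1 \<le> real R * (2 * z)" using zh by (intro mult_left_mono) auto
    then show "8 * real R / z \<le> 16 * real R" using zh z1 by (simp add: field_simps)
    have "x * real (card (ballV T R)) \<le> 2 * ((1 - z) * real (card (ballV T R)))"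
      using omz cpos by (simp add: mult_right_mono)
    then show "4 / ((1 - z) * real (card (ballV T R))) \<le> 8 / (x * real (card (ballV T R)))"
      using x cpos z1 by (simp add: field_simps)
  qed
  finally show "hN T (sqrt (1 - x)) N [] \<le> max (16 * real R) (8 / (x * real (card (ballV T R))))"
    unfolding z_def .
qed


section \<open>Spine\<close>

lemma spine_ray: assumes "Gamma_S_inf T" shows "ray T (spine T)"
proof -
  have "\<exists>!f. ray T f" using assms unfolding Gamma_S_inf_def by blast
  then show ?thesis unfolding spine_def by (rule theI')
qed

lemma ray_unique: "Gamma_S_inf T \<Longrightarrow> ray T f \<Longrightarrow> f = spine T"
  using spine_ray unfolding Gamma_S_inf_def by blast

lemma spine_0: "Gamma_S_inf T \<Longrightarrow> spine T 0 = []"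
  using spine_ray unfolding ray_def by blast

lemma spine_Suc: "Gamma_S_inf T \<Longrightarrow> spine T (Suc k) \<in> T \<and> (\<exists>i. spine T (Suc k) = spine T k @ [i])"
  using spine_ray unfolding ray_def by blast

lemma spine_len: assumes "Gamma_S_inf T" shows "length (spine T k) = k"
proof (induction k)
  case 0 then show ?case using spine_0[OF assms] by simp
next
  case (Suc k)
  obtain i where "spine T (Suc k) = spine T k @ [i]" using spine_Suc[OF assms] by blast
  then show ?case using Suc by simp
qed

lemma spine_in: assumes "Gamma_S_inf T" shows "spine T k \<in> T"
proof (cases k)
  case 0
  have "planar_tree T" using assms unfolding Gamma_S_inf_def Gamma_def by simp
  then show ?thesis using 0 spine_0[OF assms] pt_root by simp
next
  case (Suc j) then show ?thesis using spine_Suc[OF assms] by blast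
qed

lemma spine_prefix: assumes "Gamma_S_inf T" shows "j \<le> k \<Longrightarrow> \<exists>w. spine T k = spine T j @ w"
proof (induction k)
  case 0 then show ?case by simp
next
  case (Suc k)
  show ?case
  proof (cases "j = Suc k")
    case True then show ?thesis by simp
  next
    case False
    then obtain w where "spine T k = spine T j @ w" using Suc by fastforce
    moreover obtain i where "spine T (Suc k) = spine T k @ [i]" using spine_Suc[OF assms] by blast
    ultimately show ?thesis by auto
  qed
qed

lemma spine_take: assumes "Gamma_S_inf T" "j \<le> k" shows "take j (spine T k) = spine T j"
proof -
  obtain w where "spine T k = spine T j @ w" using spine_prefix[OF assms] by blast
  then show ?thesis using spine_len[OF assms(1)] by simp
qed

lemma spine_butlast: assumes "Gamma_S_inf T" shows "butlast (spine T (Suc k)) = spine T k"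
  using spine_Suc[OF assms, of k] by auto

lemma spine_1: assumes "Gamma_S_inf T" shows "spine T 1 = [0]"
proof -
  obtain i where i: "spine T 1 = [i]" using spine_Suc[OF assms, of 0] spine_0[OF assms] by auto
  then have "[i] \<in> T" using spine_in[OF assms, of 1] by simp
  then have "i = 0" using gamma_single assms unfolding Gamma_S_inf_def by blast
  then show ?thesis using i by simp
qed

definition pre :: "nat list set \<Rightarrow> nat \<Rightarrow> nat list \<Rightarrow> bool" where
  "pre T k v \<longleftrightarrow> (\<exists>w. v = spine T k @ w)"

lemma pre_0: "Gamma_S_inf T \<Longrightarrow> pre T 0 v"
  unfolding pre_def using spine_0 by simp

lemma pre_mono: assumes "Gamma_S_inf T" "pre T k v" "j \<le> k" shows "pre T j v"
proof -
  obtain w' where w': "spine T k = spine T j @ w'" using spine_prefix[OF assms(1) assms(3)] by blast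
  obtain w where w: "v = spine T k @ w" using assms(2) unfolding pre_def by blast
  have "v = spine T j @ (w' @ w)" using w w' by simp
  then show ?thesis unfolding pre_def by blast
qed

lemma pre_append: "pre T k v \<Longrightarrow> pre T k (v @ w)"
  unfolding pre_def by auto

lemma pre_len: assumes "Gamma_S_inf T" "pre T k v" shows "k \<le> length v"
proof -
  obtain w where w: "v = spine T k @ w" using assms(2) unfolding pre_def by blast
  then show ?thesis using spine_len[OF assms(1), of k] by simp
qed

lemma pre_self: "pre T k (spine T k)"
  unfolding pre_def by auto

lemma list_snoc_prefix: "(\<exists>w. v @ [j] = s @ w) \<longleftrightarrow> (\<exists>w. v = s @ w) \<or> s = v @ [j]"
proof
  assume "\<exists>w. v @ [j] = s @ w"
  then obtain w where w: "v @ [j] = s @ w" by blast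
  show "(\<exists>w. v = s @ w) \<or> s = v @ [j]"
  proof (cases w rule: rev_cases)
    case Nil then show ?thesis using w by simp
  next
    case (snoc w' x) then have "v = s @ w'" using w by simp
    then show ?thesis by blast
  qed
next
  assume "(\<exists>w. v = s @ w) \<or> s = v @ [j]"
  then show "\<exists>w. v @ [j] = s @ w" by auto
qed

lemma pre_snoc: "pre T k (v @ [j]) \<longleftrightarrow> pre T k v \<or> spine T k = v @ [j]"
  unfolding pre_def by (rule list_snoc_prefix)

lemma pre_1: assumes "Gamma_S_inf T" "v \<in> T" "v \<noteq> []" shows "pre T 1 v"
proof -
  obtain a w where v: "v = a # w" using assms(3) by (cases v) auto
  have pt: "planar_tree T" using assms(1) unfolding Gamma_S_inf_def Gamma_def by simp
  have "[a] \<in> T" using pt_prefix[OF pt, of "[a]" w] assms(2) v by simp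
  then have "a = 0" using gamma_single assms(1) unfolding Gamma_S_inf_def by blast
  then show ?thesis unfolding pre_def using spine_1[OF assms(1)] v by simp
qed

section \<open>Koenig\<close>

lemma koenig:
  assumes pt: "planar_tree T" and UT: "U \<subseteq> T" and pc: "\<And>v w. v @ w \<in> U \<Longrightarrow> v \<in> U"
    and inf: "infinite U"
  shows "\<exists>f. ray T f \<and> (\<forall>k. f k \<in> U)"
proof -
  define D where "D v = {w \<in> U. \<exists>x. w = v @ x}" for v
  have step: "\<exists>i. v @ [i] \<in> U \<and> infinite (D (v @ [i]))" if iv: "infinite (D v)" for v
  proof (rule ccontr)
    assume nex: "\<not> (\<exists>i. v @ [i] \<in> U \<and> infinite (D (v @ [i])))"
    obtain w where "w \<in> D v" using iv by (metis finite.emptyI ex_in_conv)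
    then obtain x where "v @ x \<in> U" unfolding D_def by blast
    then have vT: "v \<in> T" using UT pt_prefix[OF pt] by blast
    have sub: "D v \<subseteq> {v} \<union> (\<Union>i\<in>{i. v @ [i] \<in> T}. D (v @ [i]))"
    proof
      fix w assume w: "w \<in> D v"
      then obtain x where x: "w = v @ x" "w \<in> U" unfolding D_def by blast
      show "w \<in> {v} \<union> (\<Union>i\<in>{i. v @ [i] \<in> T}. D (v @ [i]))"
      proof (cases x)
        case Nil then show ?thesis using x by simp
      next
        case (Cons i x')
        then have "w = (v @ [i]) @ x'" using x by simp
        then have "v @ [i] \<in> U" using pc x by metis
        then have "v @ [i] \<in> T" using UT by blast
        moreover have "w \<in> D (v @ [i])" unfolding D_def using \<open>w = (v @ [i]) @ x'\<close> x by blast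
        ultimately show ?thesis by blast
      qed
    qed
    have "finite (\<Union>i\<in>{i. v @ [i] \<in> T}. D (v @ [i]))"
    proof (rule finite_UN_I)
      show "finite {i. v @ [i] \<in> T}" by (rule pt_fin_children[OF pt vT])
      fix i assume "i \<in> {i. v @ [i] \<in> T}"
      show "finite (D (v @ [i]))"
      proof (cases "v @ [i] \<in> U")
        case True then show ?thesis using nex by blast
      next
        case False
        then have "D (v @ [i]) = {}" unfolding D_def using pc by blast
        then show ?thesis by simp
      qed
    qed
    then have "finite (D v)" using sub by (meson finite.emptyI finite.insertI finite_Un finite_subset)
    then show False using iv by simp
  qed
  define nxt where "nxt u = (SOME u'. (\<exists>i. u' = u @ [i]) \<and> u' \<in> U \<and> infinite (D u'))" for u
  have nxt: "(\<exists>i. nxt u = u @ [i]) \<and> nxt u \<in> U \<and> infinite (D (nxt u))" if iu: "infinite (D u)" for u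
  proof -
    obtain i where "u @ [i] \<in> U \<and> infinite (D (u @ [i]))" using step[OF iu] by blast
    then have "\<exists>u'. (\<exists>i. u' = u @ [i]) \<and> u' \<in> U \<and> infinite (D u')" by blast
    then show ?thesis unfolding nxt_def by (rule someI_ex)
  qed
  define f where "f = rec_nat [] (\<lambda>k u. nxt u)"
  have f0: "f 0 = []" and fS: "f (Suc k) = nxt (f k)" for k unfolding f_def by simp_all
  have D0: "D [] = U" unfolding D_def by simp
  have fi: "infinite (D (f k))" for k
    by (induction k) (use inf D0 f0 fS nxt in auto)
  have "\<forall>k. f (Suc k) \<in> T \<and> (\<exists>i. f (Suc k) = f k @ [i])"
  proof
    fix k
    show "f (Suc k) \<in> T \<and> (\<exists>i. f (Suc k) = f k @ [i])" using nxt[OF fi[of k]] fS UT by auto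
  qed
  then have "ray T f" unfolding ray_def using f0 by blast
  moreover have "f k \<in> U" for k
  proof (cases k)
    case 0
    have "U \<noteq> {}" using inf by auto
    then obtain u where "u \<in> U" by blast
    then have "[] \<in> U" using pc[of "[]" u] by simp
    then show ?thesis using 0 f0 by simp
  next
    case (Suc j) then show ?thesis using nxt[OF fi[of j]] fS by simp
  qed
  ultimately show ?thesis by blast
qed

lemma finite_notpre:
  assumes S: "Gamma_S_inf T" shows "finite {v \<in> T. \<not> pre T K v}"
proof (rule ccontr)
  assume inf: "infinite {v \<in> T. \<not> pre T K v}"
  have pt: "planar_tree T" using S unfolding Gamma_S_inf_def Gamma_def by simp
  obtain f where f: "ray T f" "\<forall>k. f k \<in> {v \<in> T. \<not> pre T K v}"
  proof (rule exE[OF koenig[OF pt _ _ inf]])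
    show "{v \<in> T. \<not> pre T K v} \<subseteq> T" by blast
    fix v w assume "v @ w \<in> {v \<in> T. \<not> pre T K v}"
    then show "v \<in> {v \<in> T. \<not> pre T K v}" using pt_prefix[OF pt] pre_append by blast
  qed blast
  have "f = spine T" by (rule ray_unique[OF S f(1)])
  then show False using f(2) pre_self[of T K] by auto
qed


section \<open>Hull counting\<close>

lemma A_verts_eq: "A_verts T i = {v \<in> T. pre T i v \<and> \<not> pre T (Suc i) v}"
  unfolding A_verts_def pre_def by blast

lemma finite_A_verts: assumes "Gamma_S_inf T" shows "finite (A_verts T i)"
  using finite_notpre[OF assms, of "Suc i"] unfolding A_verts_eq by (rule rev_finite_subset) blast

lemma finite_A_edges: assumes "Gamma_S_inf T" shows "finite (A_edges T i)"
proof -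
  have "A_edges T i \<subseteq> A_verts T i \<times> A_verts T i" unfolding A_edges_def by blast
  then show ?thesis using finite_A_verts[OF assms] by (meson finite_SigmaI finite_subset)
qed

lemma card_A_verts: assumes S: "Gamma_S_inf T" shows "card (A_verts T i) \<le> card (A_edges T i) + 1"
proof -
  have pt: "planar_tree T" using S unfolding Gamma_S_inf_def Gamma_def by simp
  define B where "B = A_verts T i - {spine T i}"
  have "card B \<le> card (A_edges T i)"
  proof (rule card_inj_on_le[of "\<lambda>v. (butlast v, v)"])
    show "inj_on (\<lambda>v. (butlast v, v)) B" by (rule inj_onI) simp
    show "finite (A_edges T i)" by (rule finite_A_edges[OF S])
    show "(\<lambda>v. (butlast v, v)) ` B \<subseteq> A_edges T i"
    proof
      fix e assume "e \<in> (\<lambda>v. (butlast v, v)) ` B"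
      then obtain v where v: "v \<in> B" "e = (butlast v, v)" by blast
      then have vT: "v \<in> T" and pv: "pre T i v" and npv: "\<not> pre T (Suc i) v" and vne: "v \<noteq> spine T i"
        unfolding B_def A_verts_eq by auto
      obtain w where w: "v = spine T i @ w" using pv unfolding pre_def by blast
      then have wne: "w \<noteq> []" using vne by auto
      have bv: "butlast v = spine T i @ butlast w" using w wne by (simp add: butlast_append)
      have "v \<noteq> []" using wne w by simp
      then have vb: "v = butlast v @ [last v]" by simp
      have bT: "butlast v \<in> T" using pt_prefix[OF pt, of "butlast v" "[last v]"] vb vT by simp
      have "\<not> pre T (Suc i) (butlast v)" using npv vb pre_append by metis
      moreover have "pre T i (butlast v)" using bv unfolding pre_def by blast
      ultimately have "butlast v \<in> A_verts T i" using bT unfolding A_verts_eq by blast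
      moreover have "v \<in> A_verts T i" using v(1) unfolding B_def by blast
      ultimately show "e \<in> A_edges T i" unfolding A_edges_def using v(2) vb by blast
    qed
  qed
  moreover have "A_verts T i \<subseteq> insert (spine T i) B" unfolding B_def by blast
  then have "card (A_verts T i) \<le> card (insert (spine T i) B)"
    using finite_A_verts[OF S] unfolding B_def by (intro card_mono) auto
  moreover have "card (insert (spine T i) B) \<le> card B + 1"
  proof -
    have "finite B" using finite_A_verts[OF S] unfolding B_def by simp
    then show ?thesis by (simp add: card_insert_if)
  qed
  ultimately show ?thesis by linarith
qed

lemma W_sub: assumes S: "Gamma_S_inf T" and R: "R \<ge> 1"
  shows "{v \<in> T. \<not> pre T R v} \<subseteq> insert [] (\<Union>i\<in>{1..<R}. A_verts T i)"
proof
  fix v assume v: "v \<in> {v \<in> T. \<not> pre T R v}"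
  show "v \<in> insert [] (\<Union>i\<in>{1..<R}. A_verts T i)"
  proof (cases "v = []")
    case True then show ?thesis by simp
  next
    case False
    have vT: "v \<in> T" and np: "\<not> pre T R v" using v by auto
    have p1: "pre T 1 v" by (rule pre_1[OF S vT False])
    define L where "L = (LEAST k. \<not> pre T k v)"
    have nL: "\<not> pre T L v" unfolding L_def by (rule LeastI[of _ R]) (rule np)
    have LR: "L \<le> R" unfolding L_def by (rule Least_le) (rule np)
    have L2: "L \<ge> 2"
    proof (rule ccontr)
      assume "\<not> L \<ge> 2"
      then have "L \<le> 1" by simp
      then have "pre T L v" using pre_mono[OF S p1] by blast
      then show False using nL by simp
    qed
    have pL: "pre T (L - 1) v"
    proof -
      have "L - 1 < L" using L2 by simp
      then show ?thesis unfolding L_def using not_less_Least by blast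
    qed
    have "v \<in> A_verts T (L - 1)" unfolding A_verts_eq using vT pL nL L2
      by (simp add: Suc_diff_1)
    moreover have "L - 1 \<in> {1..<R}" using L2 LR by auto
    ultimately show ?thesis by blast
  qed
qed

lemma card_W: assumes S: "Gamma_S_inf T" and R: "R \<ge> 1"
  shows "card {v \<in> T. \<not> pre T R v} \<le> hull_size T R"
proof -
  have fU: "finite (\<Union>i\<in>{1..<R}. A_verts T i)" using finite_A_verts[OF S] by blast
  have "card {v \<in> T. \<not> pre T R v} \<le> card (insert [] (\<Union>i\<in>{1..<R}. A_verts T i))"
    by (rule card_mono[OF _ W_sub[OF S R]]) (use fU in simp)
  also have "\<dots> \<le> card (\<Union>i\<in>{1..<R}. A_verts T i) + 1"
    using fU by (simp add: card_insert_le_m1)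
  also have "card (\<Union>i\<in>{1..<R}. A_verts T i) \<le> (\<Sum>i\<in>{1..<R}. card (A_verts T i))"
    by (rule card_UN_le) simp
  also have "\<dots> \<le> (\<Sum>i\<in>{1..<R}. card (A_edges T i) + 1)"
    by (rule sum_mono) (rule card_A_verts[OF S])
  also have "\<dots> = (\<Sum>i\<in>{1..<R}. card (A_edges T i)) + (R - 1)"
    by (simp only: sum.distrib) simp
  also have "(\<Sum>i\<in>{1..<R}. card (A_edges T i)) \<le> (\<Sum>i=1..R. card (A_edges T i))"
    by (rule sum_mono2) auto
  finally show ?thesis unfolding hull_size_def using R by linarith
qed

definition Ch :: "nat list set \<Rightarrow> nat list \<Rightarrow> nat list set" where
  "Ch T v = {u \<in> T. \<exists>i. u = v @ [i]}"

lemma finite_Ch: assumes pt: "planar_tree T" shows "finite (Ch T v)"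
proof (cases "v \<in> T")
  case True
  have "Ch T v \<subseteq> (\<lambda>i. v @ [i]) ` {i. v @ [i] \<in> T}" unfolding Ch_def by blast
  then show ?thesis using pt_fin_children[OF pt True] by (meson finite_imageI finite_subset)
next
  case False
  then have "Ch T v = {}" unfolding Ch_def using pt_prefix[OF pt] by blast
  then show ?thesis by simp
qed

lemma card_nbrs_Ch: assumes pt: "planar_tree T" shows "card (nbrs T v) \<le> card (Ch T v) + 1"
proof -
  have "nbrs T v \<subseteq> insert (butlast v) (Ch T v)" unfolding nbrs_def Ch_def by auto
  then have "card (nbrs T v) \<le> card (insert (butlast v) (Ch T v))"
    using finite_Ch[OF pt] by (intro card_mono) auto
  also have "\<dots> \<le> card (Ch T v) + 1" using finite_Ch[OF pt] by (simp add: card_insert_le_m1)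
  finally show ?thesis .
qed

lemma sum_deg_W: assumes S: "Gamma_S_inf T" and R: "R \<ge> 1"
  shows "(\<Sum>v\<in>{v \<in> T. \<not> pre T R v}. real (card (nbrs T v))) \<le> 2 * real (hull_size T R) + 1"
proof -
  have pt: "planar_tree T" using S unfolding Gamma_S_inf_def Gamma_def by simp
  define W where "W = {v \<in> T. \<not> pre T R v}"
  have fW: "finite W" unfolding W_def by (rule finite_notpre[OF S])
  have "(\<Sum>v\<in>W. card (nbrs T v)) \<le> (\<Sum>v\<in>W. card (Ch T v) + 1)"
    by (rule sum_mono) (rule card_nbrs_Ch[OF pt])
  also have "\<dots> = (\<Sum>v\<in>W. card (Ch T v)) + card W" by (simp only: sum.distrib) simp
  also have "(\<Sum>v\<in>W. card (Ch T v)) = card (\<Union>v\<in>W. Ch T v)"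
  proof (rule card_UN_disjoint[symmetric])
    show "finite W" by (rule fW)
    show "\<forall>v\<in>W. finite (Ch T v)" using finite_Ch[OF pt] by blast
    show "\<forall>v\<in>W. \<forall>v'\<in>W. v \<noteq> v' \<longrightarrow> Ch T v \<inter> Ch T v' = {}" unfolding Ch_def by auto
  qed
  also have "card (\<Union>v\<in>W. Ch T v) \<le> card (insert (spine T R) W)"
  proof (rule card_mono)
    show "finite (insert (spine T R) W)" using fW by simp
    show "(\<Union>v\<in>W. Ch T v) \<subseteq> insert (spine T R) W"
    proof
      fix u assume "u \<in> (\<Union>v\<in>W. Ch T v)"
      then obtain v j where v: "v \<in> W" "u = v @ [j]" "u \<in> T" unfolding Ch_def by blast
      show "u \<in> insert (spine T R) W"
      proof (cases "pre T R u")
        case True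
        then have "spine T R = u" using v pre_snoc[of T R v j] unfolding W_def by auto
        then show ?thesis by simp
      next
        case False then show ?thesis using v unfolding W_def by simp
      qed
    qed
  qed
  also have "\<dots> \<le> card W + 1" using fW by (simp add: card_insert_le_m1)
  finally have "(\<Sum>v\<in>W. card (nbrs T v)) \<le> 2 * card W + 1" by simp
  moreover have "card W \<le> hull_size T R" unfolding W_def by (rule card_W[OF S R])
  ultimately have "(\<Sum>v\<in>W. card (nbrs T v)) \<le> 2 * hull_size T R + 1" by linarith
  then have "real (\<Sum>v\<in>W. card (nbrs T v)) \<le> 2 * real (hull_size T R) + 1" by linarith
  then show ?thesis unfolding W_def by simp
qed


section \<open>Test function\<close>

definition cnt :: "nat list set \<Rightarrow> nat \<Rightarrow> nat list \<Rightarrow> nat" where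
  "cnt T R v = card {k \<in> {1..R}. pre T k v}"

definition ft :: "nat list set \<Rightarrow> nat \<Rightarrow> nat list \<Rightarrow> real" where
  "ft T R v = (if v \<in> T then 1 - real (cnt T R v) / real R else 0)"

definition spv :: "nat list set \<Rightarrow> nat \<Rightarrow> nat list \<Rightarrow> bool" where
  "spv T R v \<longleftrightarrow> v = spine T (length v) \<and> length v \<le> R"

lemma cnt_le: "cnt T R v \<le> R"
proof -
  have "cnt T R v \<le> card {1..R}" unfolding cnt_def by (rule card_mono) auto
  then show ?thesis by simp
qed

lemma ft_range: assumes "R \<ge> 1" shows "0 \<le> ft T R v" "ft T R v \<le> 1"
  using cnt_le[of T R v] assms unfolding ft_def by (auto simp: field_simps)

lemma ft_root: assumes S: "Gamma_S_inf T" shows "ft T R [] = 1"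
proof -
  have "{k \<in> {1..R}. pre T k []} = {}" using pre_len[OF S, of _ "[]"] by fastforce
  moreover have "[] \<in> T" using S pt_root unfolding Gamma_S_inf_def Gamma_def by blast
  ultimately show ?thesis unfolding ft_def cnt_def by simp
qed

lemma ft_nz: assumes S: "Gamma_S_inf T" and R: "R \<ge> 1" and nz: "ft T R v \<noteq> 0"
  shows "v \<in> T \<and> \<not> pre T R v"
proof -
  have vT: "v \<in> T" using nz unfolding ft_def by (auto split: if_splits)
  moreover have "\<not> pre T R v"
  proof
    assume p: "pre T R v"
    have "{k \<in> {1..R}. pre T k v} = {1..R}" using pre_mono[OF S p] by auto
    then have "cnt T R v = R" unfolding cnt_def by simp
    then show False using nz vT R unfolding ft_def by simp
  qed
  ultimately show ?thesis by simp
qed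

lemma cnt_snoc: assumes S: "Gamma_S_inf T"
  shows "cnt T R (v @ [j]) = cnt T R v + (if spv T R (v @ [j]) then 1 else 0)"
proof -
  let ?u = "v @ [j]"
  have e: "{k \<in> {1..R}. pre T k ?u} = {k \<in> {1..R}. pre T k v} \<union> {k \<in> {1..R}. spine T k = ?u}"
    using pre_snoc[of T _ v j] by blast
  have d: "{k \<in> {1..R}. pre T k v} \<inter> {k \<in> {1..R}. spine T k = ?u} = {}"
  proof -
    { fix k assume "pre T k v" "spine T k = ?u"
      then have "k \<le> length v" "k = length ?u" using pre_len[OF S] spine_len[OF S, of k] by auto
      then have False by simp }
    then show ?thesis by blast
  qed
  have lk: "k = length ?u" if "spine T k = ?u" for k
  proof -
    have "length (spine T k) = k" by (rule spine_len[OF S])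
    then show ?thesis using that by simp
  qed
  have s2: "{k \<in> {1..R}. spine T k = ?u} = (if spv T R ?u then {length ?u} else {})"
  proof (cases "spv T R ?u")
    case True
    { fix k assume k: "k \<in> {1..R}" "spine T k = ?u"
      then have "k = length ?u" using lk by blast }
    moreover have "length ?u \<in> {1..R}" "spine T (length ?u) = ?u" using True unfolding spv_def by (auto simp: spine_len[OF S])
    ultimately show ?thesis using True by auto
  next
    case False
    { fix k assume k: "k \<in> {1..R}" "spine T k = ?u"
      then have "k = length ?u" using lk by blast
      then have "spv T R ?u" using k unfolding spv_def by auto
      then have False using False by simp }
    then show ?thesis using False by auto
  qed
  show ?thesis unfolding cnt_def e
    by (subst card_Un_disjoint) (use d s2 in auto)
qed

lemma ft_child_diff: assumes S: "Gamma_S_inf T" and R: "R \<ge> 1" and T: "v \<in> T" "v @ [j] \<in> T"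
  shows "ft T R (v @ [j]) - ft T R v = (if spv T R (v @ [j]) then - 1 / real R else 0)"
  using cnt_snoc[OF S, of R v j] T R unfolding ft_def by (auto simp: field_simps)

lemma ft_adj: assumes S: "Gamma_S_inf T" and R: "R \<ge> 1" and u: "u \<in> nbrs T v"
  shows "(ft T R u - ft T R v)\<^sup>2 \<le> 1 / (real R)\<^sup>2 \<and> ((ft T R u - ft T R v)\<^sup>2 \<noteq> 0 \<longrightarrow> spv T R u \<and> spv T R v)"
proof -
  have key: "(ft T R (w @ [j]) - ft T R w)\<^sup>2 \<le> 1 / (real R)\<^sup>2 \<and> ((ft T R (w @ [j]) - ft T R w)\<^sup>2 \<noteq> 0 \<longrightarrow> spv T R (w @ [j]) \<and> spv T R w)"
    if wT: "w \<in> T" "w @ [j] \<in> T" for w j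
  proof -
    have d: "ft T R (w @ [j]) - ft T R w = (if spv T R (w @ [j]) then - 1 / real R else 0)"
      by (rule ft_child_diff[OF S R wT])
    have "spv T R w" if sp: "spv T R (w @ [j])"
    proof -
      have l: "w @ [j] = spine T (Suc (length w))" using sp unfolding spv_def by simp
      have "w = butlast (w @ [j])" by simp
      also have "\<dots> = spine T (length w)" using l spine_butlast[OF S] by metis
      finally show ?thesis using sp unfolding spv_def by simp
    qed
    then show ?thesis using d by (auto simp: power_divide)
  qed
  from u consider (c) j where "u = v @ [j]" "v \<in> T" "u \<in> T" | (p) j where "v = u @ [j]" "v \<in> T" "u \<in> T"
    unfolding nbrs_def by blast
  then show ?thesis
  proof cases
    case c then show ?thesis using key[of v j] by simp
  next
    case p then show ?thesis using key[of u j] by (simp add: power2_commute)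
  qed
qed

lemma G_bound: assumes S: "Gamma_S_inf T" and R: "R \<ge> 1"
  shows "(\<Sum>u\<in>nbrs T v. (ft T R u - ft T R v)\<^sup>2) \<le> 2 / (real R)\<^sup>2"
    and "(\<Sum>u\<in>nbrs T v. (ft T R u - ft T R v)\<^sup>2) \<noteq> 0 \<Longrightarrow> spv T R v"
proof -
  have pt: "planar_tree T" using S unfolding Gamma_S_inf_def Gamma_def by simp
  define g where "g u = (ft T R u - ft T R v)\<^sup>2" for u
  define P where "P = nbrs T v \<inter> {spine T (Suc (length v)), spine T (length v - 1)}"
  have zero: "g u = 0" if "u \<in> nbrs T v" "u \<notin> P" for u
  proof (rule ccontr)
    assume "g u \<noteq> 0"
    then have sp: "spv T R u" using ft_adj[OF S R that(1)] unfolding g_def by blast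
    have "length u = Suc (length v) \<or> length v = Suc (length u)" using that(1) unfolding nbrs_def by auto
    then have "u \<in> {spine T (Suc (length v)), spine T (length v - 1)}" using sp unfolding spv_def
      by (metis diff_Suc_1 insertCI)
    then show False using that by (simp add: P_def)
  qed
  have "(\<Sum>u\<in>nbrs T v. g u) = (\<Sum>u\<in>P. g u)"
    by (rule sum.mono_neutral_right) (use finite_nbrs[OF pt] zero in \<open>auto simp: P_def\<close>)
  also have "\<dots> \<le> real (card P) * (1 / (real R)\<^sup>2)"
    by (rule sum_bounded_above) (use ft_adj[OF S R] in \<open>auto simp: P_def g_def\<close>)
  also have "\<dots> \<le> 2 * (1 / (real R)\<^sup>2)"
  proof -
    have "card P \<le> card {spine T (Suc (length v)), spine T (length v - 1)}" unfolding P_def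
      by (rule card_mono) auto
    also have "\<dots> \<le> 2" by (simp add: card_insert_if)
    finally show ?thesis by (intro mult_right_mono) auto
  qed
  finally show "(\<Sum>u\<in>nbrs T v. (ft T R u - ft T R v)\<^sup>2) \<le> 2 / (real R)\<^sup>2" unfolding g_def by simp
  assume "(\<Sum>u\<in>nbrs T v. (ft T R u - ft T R v)\<^sup>2) \<noteq> 0"
  then obtain u where "u \<in> nbrs T v" "(ft T R u - ft T R v)\<^sup>2 \<noteq> 0" using sum.neutral by force
  then show "spv T R v" using ft_adj[OF S R] by blast
qed


lemma good_mono: "good T S f \<Longrightarrow> S \<subseteq> S' \<Longrightarrow> good T S' f"
  unfolding good_def by blast

lemma good_ft: assumes S: "Gamma_S_inf T" and R: "R \<ge> 1" and sub: "{v \<in> T. \<not> pre T (Suc R) v} \<subseteq> S'"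
  shows "good T S' (ft T R)"
  unfolding good_def
proof (intro allI impI)
  fix v assume "ft T R v \<noteq> 0"
  then have vT: "v \<in> T" and np: "\<not> pre T R v" using ft_nz[OF S R] by auto
  have np1: "\<not> pre T (Suc R) v" using np pre_mono[OF S, of "Suc R" v R] by auto
  have "nbrs T v \<subseteq> {v \<in> T. \<not> pre T (Suc R) v}"
  proof
    fix u assume u: "u \<in> nbrs T v"
    then have uT: "u \<in> T" unfolding nbrs_def by simp
    from u consider (c) j where "u = v @ [j]" | (p) j where "v = u @ [j]" unfolding nbrs_def by blast
    then have "\<not> pre T (Suc R) u"
    proof cases
      case c
      show ?thesis
      proof
        assume "pre T (Suc R) u"
        then have "pre T (Suc R) v \<or> spine T (Suc R) = v @ [j]" using c pre_snoc by simp
        then show False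
        proof
          assume "pre T (Suc R) v" then show False using np1 by simp
        next
          assume "spine T (Suc R) = v @ [j]"
          then have "v = spine T R" using spine_butlast[OF S, of R] by (metis butlast_snoc)
          then show False using np pre_self by metis
        qed
      qed
    next
      case p
      then show ?thesis using np1 pre_append by metis
    qed
    then show "u \<in> {v \<in> T. \<not> pre T (Suc R) v}" using uT by simp
  qed
  then show "v \<in> S' \<and> nbrs T v \<subseteq> S'" using sub vT np1 by blast
qed

lemma Ef_bound:
  assumes S: "Gamma_S_inf T" and R: "R \<ge> 1" and z: "0 \<le> z" "z \<le> 1" and fS: "finite S'"
    and gd: "good T S' (ft T R)" and sp: "spine T ` {..R} \<subseteq> S'"
  shows "BL T z S' (ft T R) (ft T R) \<le> (1 - z) * (2 * real (hull_size T R) + 1) + 2 / real R"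
proof -
  have pt: "planar_tree T" using S unfolding Gamma_S_inf_def Gamma_def by simp
  define f where "f = ft T R"
  define W where "W = {v \<in> T. \<not> pre T R v}"
  have fW: "finite W" unfolding W_def by (rule finite_notpre[OF S])
  have A: "(\<Sum>v\<in>S'. real (card (nbrs T v)) * (f v)\<^sup>2) \<le> 2 * real (hull_size T R) + 1"
  proof -
    have "(\<Sum>v\<in>S'. real (card (nbrs T v)) * (f v)\<^sup>2) = (\<Sum>v\<in>S' \<inter> W. real (card (nbrs T v)) * (f v)\<^sup>2)"
      by (rule sum.mono_neutral_right) (use fS ft_nz[OF S R] in \<open>auto simp: W_def f_def\<close>)
    also have "\<dots> \<le> (\<Sum>v\<in>S' \<inter> W. real (card (nbrs T v)))"
    proof (rule sum_mono)
      fix v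
      have "(f v)\<^sup>2 \<le> 1" using ft_range[OF R, of T v] unfolding f_def by (simp add: abs_square_le_1)
      then show "real (card (nbrs T v)) * (f v)\<^sup>2 \<le> real (card (nbrs T v))"
        by (simp add: mult_left_le)
    qed
    also have "\<dots> \<le> (\<Sum>v\<in>W. real (card (nbrs T v)))" by (rule sum_mono2[OF fW]) auto
    also have "\<dots> \<le> 2 * real (hull_size T R) + 1" unfolding W_def by (rule sum_deg_W[OF S R])
    finally show ?thesis .
  qed
  define G where "G v = (\<Sum>u\<in>nbrs T v. (f u - f v)\<^sup>2)" for v
  have B: "(\<Sum>v\<in>S'. G v) \<le> 4 / real R"
  proof -
    have "(\<Sum>v\<in>S'. G v) = (\<Sum>v\<in>spine T ` {..R}. G v)"
    proof (rule sum.mono_neutral_right[OF fS sp])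
      show "\<forall>v\<in>S' - spine T ` {..R}. G v = 0"
      proof
        fix v assume v: "v \<in> S' - spine T ` {..R}"
        show "G v = 0"
        proof (rule ccontr)
          assume "G v \<noteq> 0"
          then have "spv T R v" using G_bound(2)[OF S R] unfolding G_def f_def by blast
          then have "v \<in> spine T ` {..R}" unfolding spv_def by auto
          then show False using v by simp
        qed
      qed
    qed
    also have "\<dots> \<le> real (card (spine T ` {..R})) * (2 / (real R)\<^sup>2)"
      by (rule sum_bounded_above) (use G_bound(1)[OF S R] in \<open>auto simp: G_def f_def\<close>)
    also have "\<dots> \<le> real (Suc R) * (2 / (real R)\<^sup>2)"
    proof -
      have "card (spine T ` {..R}) \<le> card {..R}" by (rule card_image_le) simp
      then show ?thesis by (intro mult_right_mono) auto
    qed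
    also have "\<dots> \<le> 4 / real R"
    proof -
      have "real (Suc R) \<le> 2 * real R" using R by simp
      then have "real (Suc R) * 2 \<le> 4 * real R" by simp
      then show ?thesis using R by (simp add: field_simps power2_eq_square)
    qed
    finally show ?thesis .
  qed
  have Bn: "(\<Sum>v\<in>S'. G v) \<ge> 0" unfolding G_def by (auto intro!: sum_nonneg)
  have "BL T z S' f f = (1 - z) * (\<Sum>v\<in>S'. real (card (nbrs T v)) * (f v)\<^sup>2) + z / 2 * (\<Sum>v\<in>S'. G v)"
    unfolding G_def by (rule energy[OF fS gd[folded f_def] pt])
  also have "\<dots> \<le> (1 - z) * (2 * real (hull_size T R) + 1) + 1 / 2 * (4 / real R)"
  proof (rule add_mono)
    show "(1 - z) * (\<Sum>v\<in>S'. real (card (nbrs T v)) * (f v)\<^sup>2) \<le> (1 - z) * (2 * real (hull_size T R) + 1)"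
      using A z by (intro mult_left_mono) auto
    show "z / 2 * (\<Sum>v\<in>S'. G v) \<le> 1 / 2 * (4 / real R)"
      using B Bn z by (intro mult_mono) auto
  qed
  finally show ?thesis unfolding f_def by simp
qed


lemma QB_core:
  assumes S: "Gamma_S_inf T" and R: "R \<ge> 1" and x: "0 < x" "x < 1"
  shows "1 \<le> Q_gen T x * ((1 - sqrt (1 - x)) * (2 * real (hull_size T R) + 1) + 2 / real R)"
proof -
  have G: "Gamma T" using S unfolding Gamma_S_inf_def by simp
  have pt: "planar_tree T" using G unfolding Gamma_def by simp
  define z where "z = sqrt (1 - x)"
  have z: "0 < z" "z < 1" unfolding z_def using x by auto
  define Eb where "Eb = (1 - z) * (2 * real (hull_size T R) + 1) + 2 / real R"
  define f where "f = ft T R"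
  have bound: "(1 - z ^ Suc N)\<^sup>2 \<le> Eb * Q_gen T x" for N
  proof -
    define S' where "S' = {v \<in> T. \<not> pre T (Suc R) v} \<union> ballV T (Suc N)"
    define h where "h = hN T z N"
    have fS: "finite S'" unfolding S'_def using finite_notpre[OF S] finite_ballV[OF pt] by simp
    have gf: "good T S' f" unfolding f_def by (rule good_ft[OF S R]) (auto simp: S'_def)
    have gh: "good T S' h" unfolding h_def
      by (rule good_mono[OF good_hN[OF pt, of N "Suc N"]]) (auto simp: S'_def)
    have sp: "spine T ` {..R} \<subseteq> S'"
    proof
      fix v assume "v \<in> spine T ` {..R}"
      then obtain k where k: "k \<le> R" "v = spine T k" by auto
      have "\<not> pre T (Suc R) v" using pre_len[OF S, of "Suc R" v] k spine_len[OF S, of k] by auto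
      then show "v \<in> S'" unfolding S'_def using k spine_in[OF S] by auto
    qed
    have r: "[] \<in> S'" unfolding S'_def ballV_def using pt_root[OF pt] by simp
    have Ef: "BL T z S' f f \<le> Eb" unfolding Eb_def f_def
      by (rule Ef_bound[OF S R _ _ fS gf[unfolded f_def] sp]) (use z in auto)
    have f0: "f [] = 1" unfolding f_def by (rule ft_root[OF S])
    have Bfh: "BL T z S' f h \<ge> 1 - z ^ Suc N"
    proof -
      have "(\<Sum>v\<in>S'. f v * walk_prob T (Suc N) v) \<le> (\<Sum>v\<in>S'. walk_prob T (Suc N) v)"
      proof (rule sum_mono)
        fix v
        show "f v * walk_prob T (Suc N) v \<le> walk_prob T (Suc N) v"
          using ft_range[OF R, of T v] walk_nonneg[of T "Suc N" v] unfolding f_def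
          by (simp add: mult_left_le_one_le)
      qed
      also have "\<dots> \<le> 1" by (rule walk_sum_le[OF G fS])
      finally have "(\<Sum>v\<in>S'. f v * walk_prob T (Suc N) v) \<le> 1" .
      then have "z ^ Suc N * (\<Sum>v\<in>S'. f v * walk_prob T (Suc N) v) \<le> z ^ Suc N"
        using z by (simp add: mult_left_le)
      then show ?thesis unfolding h_def using BL_hN[OF G fS r, of z f N] f0 by simp
    qed
    have zN: "z ^ Suc N \<le> 1" using z by (intro power_le_one) auto
    have Effpos: "BL T z S' f f > 0"
    proof -
      have "real (card (nbrs T [])) * (f [])\<^sup>2 \<le> (\<Sum>v\<in>S'. real (card (nbrs T v)) * (f v)\<^sup>2)"
        by (rule member_le_sum[OF r]) (auto simp: fS)
      then have a: "1 \<le> (\<Sum>v\<in>S'. real (card (nbrs T v)) * (f v)\<^sup>2)"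
        using deg_root[OF G] f0 unfolding deg_def by simp
      have b: "0 \<le> z / 2 * (\<Sum>v\<in>S'. \<Sum>u\<in>nbrs T v. (f u - f v)\<^sup>2)" using z by (intro mult_nonneg_nonneg sum_nonneg) auto
      have "(1 - z) * 1 \<le> (1 - z) * (\<Sum>v\<in>S'. real (card (nbrs T v)) * (f v)\<^sup>2)"
        using a z by (intro mult_left_mono) auto
      then have c: "1 - z \<le> (1 - z) * (\<Sum>v\<in>S'. real (card (nbrs T v)) * (f v)\<^sup>2)" by simp
      have "0 < (1 - z) * (\<Sum>v\<in>S'. real (card (nbrs T v)) * (f v)\<^sup>2) + z / 2 * (\<Sum>v\<in>S'. \<Sum>u\<in>nbrs T v. (f u - f v)\<^sup>2)"
        using c b z by linarith
      then show ?thesis unfolding energy[OF fS gf pt] .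
    qed
    have "(1 - z ^ Suc N)\<^sup>2 \<le> (BL T z S' f h)\<^sup>2"
      using Bfh zN by (intro power_mono) auto
    also have "\<dots> \<le> BL T z S' f f * BL T z S' h h"
      by (rule BL_CS[OF fS gf gh pt]) (use z Effpos in auto)
    also have "\<dots> \<le> Eb * hN T z N []"
    proof (rule mult_mono)
      show "BL T z S' f f \<le> Eb" by (rule Ef)
      show "BL T z S' h h \<le> hN T z N []" unfolding h_def
        by (rule energy_hN_le_gen[OF G _ fS r]) (use z in auto)
      show "0 \<le> Eb" using Ef Effpos by linarith
      show "0 \<le> BL T z S' h h" by (rule energy_nonneg[OF fS gh pt]) (use z in auto)
    qed
    also have "\<dots> \<le> Eb * Q_gen T x"
    proof (rule mult_left_mono)
      show "hN T z N [] \<le> Q_gen T x" unfolding z_def by (rule hN_le_Q[OF G x])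
      show "0 \<le> Eb" using Ef Effpos by linarith
    qed
    finally show ?thesis .
  qed
  have lim: "(\<lambda>N. (1 - z ^ Suc N)\<^sup>2) \<longlonglongrightarrow> (1 - 0)\<^sup>2"
    by (intro tendsto_intros LIMSEQ_power_zero[THEN LIMSEQ_Suc]) (use z in auto)
  have "(1 - 0)\<^sup>2 \<le> Eb * Q_gen T x"
    by (rule LIMSEQ_le_const2[OF lim]) (use bound in auto)
  then show ?thesis unfolding Eb_def z_def by (simp add: mult.commute)
qed

lemma QB:
  assumes S: "Gamma_S_inf T" and R: "R \<ge> 1" and x: "0 < x" "x < 1"
  shows "1 \<le> Q_gen T x * (x * (2 * real (hull_size T R) + 1) + 2 / real R)"
proof -
  have G: "Gamma T" using S unfolding Gamma_S_inf_def by simp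
  have Qp: "Q_gen T x \<ge> 0"
    using hN_le_Q[OF G x, of 0] hN_root_ge1[OF G, of "sqrt (1 - x)" 0] x by simp
  have "1 - x \<le> sqrt (1 - x)" using x by (simp add: real_le_rsqrt power2_eq_square mult_le_cancel_left1)
  then have "1 - sqrt (1 - x) \<le> x" by simp
  then have "(1 - sqrt (1 - x)) * (2 * real (hull_size T R) + 1) \<le> x * (2 * real (hull_size T R) + 1)"
    by (intro mult_right_mono) auto
  then have "Q_gen T x * ((1 - sqrt (1 - x)) * (2 * real (hull_size T R) + 1) + 2 / real R)
      \<le> Q_gen T x * (x * (2 * real (hull_size T R) + 1) + 2 / real R)"
    using Qp by (intro mult_left_mono) auto
  then show ?thesis using QB_core[OF S R x] by linarith
qed


section \<open>Asymptotics\<close>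

lemma pow_powr: fixes b d :: real assumes "0 < b" shows "(b ^ k) powr d = (b powr d) ^ k"
proof -
  have "(b ^ k) powr d = (b powr real k) powr d" using assms by (simp add: powr_realpow)
  also have "\<dots> = b powr (d * real k)" by (simp add: powr_powr mult.commute)
  also have "\<dots> = (b powr d) ^ k" using assms by (simp add: powr_power mult.commute)
  finally show ?thesis .
qed

lemma pow_mult_powr: fixes b y d :: real assumes "0 < b" "0 < y" shows "(b ^ k * y) powr d = (b powr d) ^ k * y powr d"
  using assms by (simp add: powr_mult pow_powr)

lemma inv_powr_neg: fixes Y a :: real assumes "0 < Y" shows "(1 / Y) powr (- a) = Y powr a"
  using assms by (simp add: powr_minus powr_divide)

lemma sv_lower:
  assumes L: "slowly_varying L" and lam: "lm \<ge> 1" and th: "0 < \<theta>" "\<theta> < 1"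
  shows "\<exists>R1>0. \<forall>y\<ge>R1. \<forall>k. \<theta> ^ k * L y \<le> L (lm ^ k * y)"
proof -
  have pos: "\<And>x. x > 0 \<Longrightarrow> L x > 0" using L unfolding slowly_varying_def by blast
  have lim: "((\<lambda>R. L (lm * R) / L R) \<longlongrightarrow> 1) at_top" using L lam unfolding slowly_varying_def by simp
  have "eventually (\<lambda>R. \<theta> < L (lm * R) / L R) at_top" using order_tendstoD(1)[OF lim th(2)] .
  then obtain N where N: "\<And>R. R \<ge> N \<Longrightarrow> \<theta> < L (lm * R) / L R" unfolding eventually_at_top_linorder by blast
  define R1 where "R1 = max N 1"
  have "\<forall>y\<ge>R1. \<forall>k. \<theta> ^ k * L y \<le> L (lm ^ k * y)"
  proof (intro allI impI)
    fix y k assume y: "y \<ge> R1"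
    then have y1: "y \<ge> 1" "y \<ge> N" unfolding R1_def by auto
    show "\<theta> ^ k * L y \<le> L (lm ^ k * y)"
    proof (induction k)
      case 0 then show ?case by simp
    next
      case (Suc k)
      have lk: "lm ^ k \<ge> 1" using lam by (simp add: one_le_power)
      have ge: "lm ^ k * y \<ge> y" using mult_right_mono[OF lk, of y] y1 by simp
      have "lm ^ k * y \<ge> N" using ge y1 by linarith
      then have r: "\<theta> < L (lm * (lm ^ k * y)) / L (lm ^ k * y)" by (rule N)
      have p: "L (lm ^ k * y) > 0" using pos ge y1 by simp
      then have "\<theta> * L (lm ^ k * y) < L (lm * (lm ^ k * y))" using r by (simp add: field_simps)
      moreover have "\<theta> * (\<theta> ^ k * L y) \<le> \<theta> * L (lm ^ k * y)" using Suc th by (intro mult_left_mono) auto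
      ultimately show ?case by (simp add: mult.assoc)
    qed
  qed
  moreover have "R1 > 0" unfolding R1_def by simp
  ultimately show ?thesis by blast
qed

lemma sv_upper:
  assumes L: "slowly_varying L" and lam: "lm \<ge> 1" and th: "1 < \<theta>"
  shows "\<exists>R1>0. \<forall>y\<ge>R1. \<forall>k. L (lm ^ k * y) \<le> \<theta> ^ k * L y"
proof -
  have pos: "\<And>x. x > 0 \<Longrightarrow> L x > 0" using L unfolding slowly_varying_def by blast
  have lim: "((\<lambda>R. L (lm * R) / L R) \<longlongrightarrow> 1) at_top" using L lam unfolding slowly_varying_def by simp
  have "eventually (\<lambda>R. L (lm * R) / L R < \<theta>) at_top" using order_tendstoD(2)[OF lim th] .
  then obtain N where N: "\<And>R. R \<ge> N \<Longrightarrow> L (lm * R) / L R < \<theta>" unfolding eventually_at_top_linorder by blast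
  define R1 where "R1 = max N 1"
  have "\<forall>y\<ge>R1. \<forall>k. L (lm ^ k * y) \<le> \<theta> ^ k * L y"
  proof (intro allI impI)
    fix y k assume y: "y \<ge> R1"
    then have y1: "y \<ge> 1" "y \<ge> N" unfolding R1_def by auto
    show "L (lm ^ k * y) \<le> \<theta> ^ k * L y"
    proof (induction k)
      case 0 then show ?case by simp
    next
      case (Suc k)
      have lk: "lm ^ k \<ge> 1" using lam by (simp add: one_le_power)
      have ge: "lm ^ k * y \<ge> y" using mult_right_mono[OF lk, of y] y1 by simp
      have "lm ^ k * y \<ge> N" using ge y1 by linarith
      then have r: "L (lm * (lm ^ k * y)) / L (lm ^ k * y) < \<theta>" by (rule N)
      have p: "L (lm ^ k * y) > 0" using pos ge y1 by simp
      then have "L (lm * (lm ^ k * y)) < \<theta> * L (lm ^ k * y)" using r by (simp add: field_simps)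
      moreover have "\<theta> * L (lm ^ k * y) \<le> \<theta> * (\<theta> ^ k * L y)" using Suc th by (intro mult_left_mono) auto
      ultimately show ?case by (simp add: mult.assoc)
    qed
  qed
  moreover have "R1 > 0" unfolding R1_def by simp
  ultimately show ?thesis by blast
qed

lemma sv0_inv: "slowly_varying_at_0 l \<Longrightarrow> slowly_varying (\<lambda>y. l (1 / y))"
  unfolding slowly_varying_at_0_def by simp


lemma nat_ceil_max:
  fixes R1 R0 :: real assumes "R0 > 0"
  defines "a \<equiv> nat \<lceil>max R1 (R0 + 1)\<rceil>"
  shows "real a \<ge> R1" "real a > R0" "a \<ge> 1"
proof -
  have "real a \<ge> max R1 (R0 + 1)" unfolding a_def by linarith
  then show "real a \<ge> R1" "real a > R0" by auto
  then show "a \<ge> 1" using assms(1) by linarith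
qed

lemma dim_nonneg:
  fixes F :: "nat \<Rightarrow> real"
  assumes L: "slowly_varying Lh" and R0: "R0 > 0"
    and up: "\<forall>R::nat. real R > R0 \<longrightarrow> F R < real R powr d * Lh (real R)"
    and lo: "\<And>R. R \<ge> 1 \<Longrightarrow> 1 \<le> F R"
  shows "d \<ge> 0"
proof (rule ccontr)
  assume "\<not> d \<ge> 0"
  then have d: "d < 0" by simp
  define \<theta> where "\<theta> = 2 powr (- d / 2)"
  have th: "\<theta> > 1" unfolding \<theta>_def using d by simp
  obtain R1 where R1: "R1 > 0" "\<forall>y\<ge>R1. \<forall>k. Lh (2 ^ k * y) \<le> \<theta> ^ k * Lh y"
    using sv_upper[OF L _ th, of 2] by auto
  define a where "a = nat \<lceil>max R1 (R0 + 1)\<rceil>"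
  have a: "real a \<ge> R1" "real a > R0" "a \<ge> 1" using nat_ceil_max[OF R0, of R1] unfolding a_def by auto
  have Lpos: "Lh (real a) > 0" using L a unfolding slowly_varying_def by simp
  define C where "C = real a powr d * Lh (real a)"
  have Cpos: "C > 0" unfolding C_def using Lpos a by simp
  define r where "r = 2 powr d * \<theta>"
  have r: "r = 2 powr (d / 2)" unfolding r_def \<theta>_def by (simp add: powr_add[symmetric])
  have r1: "r < 1" "r > 0" using d powr_less_one[of 2 "d/2"] unfolding r by auto
  have bound: "1 < C * r ^ k" for k
  proof -
    define Rk where "Rk = 2 ^ k * a"
    have rR: "real Rk = 2 ^ k * real a" unfolding Rk_def by simp
    have "real Rk \<ge> real a" unfolding rR using a by simp
    then have big: "real Rk > R0" using a by simp
    have "1 \<le> F Rk" using lo[of Rk] a unfolding Rk_def by simp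
    also have "\<dots> < real Rk powr d * Lh (real Rk)" using up big by blast
    also have "\<dots> \<le> real Rk powr d * (\<theta> ^ k * Lh (real a))"
      using R1(2) a unfolding rR by (intro mult_left_mono) auto
    also have "\<dots> = C * r ^ k" unfolding rR C_def r_def
      using a by (simp add: pow_mult_powr power_mult_distrib)
    finally show ?thesis .
  qed
  obtain k where "r ^ k < 1 / C" using real_arch_pow_inv[OF _ r1(1), of "1 / C"] Cpos by auto
  then have "C * r ^ k < 1" using Cpos by (simp add: field_simps)
  then show False using bound[of k] by simp
qed


lemma part1:
  fixes Q :: "real \<Rightarrow> real" and bs :: "nat \<Rightarrow> real"
  assumes A: "\<And>x R. 0 < x \<Longrightarrow> x \<le> 3/4 \<Longrightarrow> R \<ge> 1 \<Longrightarrow> Q x \<le> max (16 * real R) (8 / (x * bs R))"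
    and Llo: "slowly_varying Llo" and R0: "R0 > 0"
    and hd: "\<forall>R::nat. real R > R0 \<longrightarrow> real R powr dh * Llo (real R) < bs R"
    and x0: "0 < x0" "x0 < 1" and llo: "slowly_varying_at_0 llo"
    and sd: "\<forall>x. 0 < x \<and> x < x0 \<longrightarrow> x powr (-1 + ds / 2) * llo x < Q x"
    and dh0: "dh \<ge> 0"
  shows "2 * dh / (1 + dh) \<le> ds"
proof (rule ccontr)
  assume "\<not> 2 * dh / (1 + dh) \<le> ds"
  then have lt: "ds * (1 + dh) < 2 * dh" using dh0 by (simp add: field_simps)
  define \<alpha> where "\<alpha> = 1 - ds / 2"
  have ag: "(1 + dh) * \<alpha> > 1" unfolding \<alpha>_def using lt by (simp add: algebra_simps)
  define q where "q = 2 powr ((1 + dh) * \<alpha>) / 2"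
  have q1: "q > 1"
  proof -
    have "2 powr 1 < 2 powr ((1 + dh) * \<alpha>)" using powr_less_mono[OF ag, of 2] by simp
    then show ?thesis unfolding q_def by simp
  qed
  define \<theta> where "\<theta> = sqrt (2 / (1 + q))"
  have th: "0 < \<theta>" "\<theta> < 1" unfolding \<theta>_def using q1 by auto
  have th2: "\<theta> * \<theta> = 2 / (1 + q)" unfolding \<theta>_def using q1 by simp
  have qth: "q * (\<theta> * \<theta>) > 1" unfolding th2 using q1 by (simp add: field_simps)
  define \<mu> where "\<mu> = 2 powr (1 + dh)"
  have mu2: "\<mu> = 2 * 2 powr dh" unfolding \<mu>_def by (simp add: powr_add)
  have mu1: "\<mu> \<ge> 1" unfolding mu2 using dh0 ge_one_powr_ge_zero[of 2 dh] by simp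
  have mua: "\<mu> powr \<alpha> = 2 * q" unfolding \<mu>_def q_def by (simp add: powr_powr)
  define m where "m y = llo (1 / y)" for y
  have msv: "slowly_varying m" unfolding m_def by (rule sv0_inv[OF llo])
  obtain R1 where R1: "R1 > 0" "\<forall>y\<ge>R1. \<forall>k. \<theta> ^ k * Llo y \<le> Llo (2 ^ k * y)"
    using sv_lower[OF Llo _ th, of 2] by auto
  obtain R2 where R2: "R2 > 0" "\<forall>y\<ge>R2. \<forall>k. \<theta> ^ k * m y \<le> m (\<mu> ^ k * y)"
    using sv_lower[OF msv mu1 th] by auto
  define a where "a = nat \<lceil>max R1 (R0 + 1)\<rceil>"
  have a: "real a \<ge> R1" "real a > R0" "a \<ge> 1" using nat_ceil_max[OF R0, of R1] unfolding a_def by auto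
  define y0 where "y0 = max R2 (2 / x0)"
  have y0a: "y0 \<ge> R2" "y0 \<ge> 2 / x0" unfolding y0_def by auto
  have "2 / x0 > 0" using x0 by simp
  then have y0: "y0 \<ge> R2" "y0 \<ge> 2 / x0" "y0 > 0" using y0a by linarith+
  have Lpos: "Llo (real a) > 0" using Llo a unfolding slowly_varying_def by simp
  have mpos: "m y0 > 0" using msv y0 unfolding slowly_varying_def by simp
  define c where "c = y0 powr \<alpha> * m y0"
  have cpos: "c > 0" unfolding c_def using mpos y0 by simp
  define c1 where "c1 = real a powr dh * Llo (real a)"
  have c1pos: "c1 > 0" unfolding c1_def using Lpos a by simp
  define C where "C = max (16 * real a) (8 * y0 / c1)"
  have key: "c * (q * (\<theta> * \<theta>)) ^ k < C" for k
  proof -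
    define Rk where "Rk = 2 ^ k * a"
    have rR: "real Rk = 2 ^ k * real a" unfolding Rk_def by simp
    have Rk1: "Rk \<ge> 1" using a unfolding Rk_def by simp
    define xk where "xk = 1 / (\<mu> ^ k * y0)"
    have mk: "\<mu> ^ k \<ge> 1" using mu1 by (simp add: one_le_power)
    have xkpos: "xk > 0" unfolding xk_def using mu1 y0 by simp
    have "\<mu> ^ k * y0 \<ge> y0" using mult_right_mono[OF mk, of y0] y0 by simp
    then have xk_le: "xk \<le> 1 / y0" unfolding xk_def using y0 by (simp add: frac_le)
    have "1 / y0 \<le> x0 / 2" using y0 x0 by (simp add: field_simps)
    then have xk_s: "xk \<le> x0 / 2" using xk_le by simp
    then have xk_x0: "xk < x0" "xk \<le> 3/4" using x0 by auto
    have "xk powr (-1 + ds / 2) * llo xk < Q xk" using sd xkpos xk_x0 by blast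
    moreover have "xk powr (-1 + ds / 2) = (\<mu> powr \<alpha>) ^ k * y0 powr \<alpha>"
    proof -
      have "xk powr (-1 + ds / 2) = (\<mu> ^ k * y0) powr \<alpha>"
        unfolding xk_def \<alpha>_def using mu1 y0 inv_powr_neg[of "\<mu> ^ k * y0" "1 - ds/2"] by simp
      then show ?thesis using mu1 y0 by (simp add: pow_mult_powr)
    qed
    moreover have "llo xk \<ge> \<theta> ^ k * m y0" using R2(2) y0 unfolding m_def xk_def by simp
    ultimately have lowA: "(2 * q) ^ k * y0 powr \<alpha> * llo xk < Q xk" "\<theta> ^ k * m y0 \<le> llo xk" unfolding mua
      by auto
    have Xn: "0 \<le> (2 * q) ^ k * y0 powr \<alpha>" using q1 by simp
    have "(2 * q) ^ k * y0 powr \<alpha> * (\<theta> ^ k * m y0) \<le> (2 * q) ^ k * y0 powr \<alpha> * llo xk"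
      by (rule mult_left_mono[OF lowA(2) Xn])
    then have low: "(2 * q) ^ k * y0 powr \<alpha> * (\<theta> ^ k * m y0) < Q xk" using lowA(1) by linarith
    have low': "c * (2 * q * \<theta>) ^ k < Q xk" using low unfolding c_def by (simp add: power_mult_distrib algebra_simps)
    have "(1::real) \<le> 2 ^ k" by (simp add: one_le_power)
    then have "1 * real a \<le> 2 ^ k * real a" by (intro mult_right_mono) auto
    then have big: "real Rk > R0" using a unfolding rR by linarith
    have "c1 * (2 powr dh * \<theta>) ^ k = (2 powr dh) ^ k * real a powr dh * (\<theta> ^ k * Llo (real a))"
      unfolding c1_def by (simp add: power_mult_distrib algebra_simps)
    also have "\<dots> \<le> (2 powr dh) ^ k * real a powr dh * Llo (2 ^ k * real a)"
      using R1(2) a by (intro mult_left_mono) auto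
    also have "\<dots> = real Rk powr dh * Llo (real Rk)" unfolding rR using a by (simp add: pow_mult_powr)
    also have "\<dots> < bs Rk" using hd big by blast
    finally have bsl: "c1 * (2 powr dh * \<theta>) ^ k < bs Rk" .
    have pk: "(2 powr dh * \<theta>) ^ k > 0" using th by simp
    have "8 / (xk * bs Rk) = 8 * (\<mu> ^ k * y0) / bs Rk" unfolding xk_def by simp
    also have "\<dots> \<le> 8 * (\<mu> ^ k * y0) / (c1 * (2 powr dh * \<theta>) ^ k)"
    proof (rule divide_left_mono)
      show "c1 * (2 powr dh * \<theta>) ^ k \<le> bs Rk" using bsl by simp
      show "0 \<le> 8 * (\<mu> ^ k * y0)" using mu1 y0 by simp
      have "c1 * (2 powr dh * \<theta>) ^ k > 0" using c1pos pk by simp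
      then show "0 < bs Rk * (c1 * (2 powr dh * \<theta>) ^ k)" using bsl by simp
    qed
    also have "\<dots> = (8 * y0 / c1) * (2 / \<theta>) ^ k"
    proof -
      define P where "P = (2 powr dh) ^ k"
      define t where "t = \<theta> ^ k"
      define s2 where "s2 = (2::real) ^ k"
      have P: "P > 0" unfolding P_def by simp
      have t: "t > 0" unfolding t_def using th by simp
      have e1: "\<mu> ^ k = s2 * P" unfolding P_def s2_def mu2 by (simp add: power_mult_distrib)
      have e2: "(2 powr dh * \<theta>) ^ k = P * t" unfolding P_def t_def by (simp add: power_mult_distrib)
      have e3: "(2 / \<theta>) ^ k = s2 / t" unfolding s2_def t_def by (simp add: power_divide)
      show ?thesis unfolding e1 e2 e3 using P t c1pos by (simp add: field_simps)
    qed
    finally have u1: "8 / (xk * bs Rk) \<le> (8 * y0 / c1) * (2 / \<theta>) ^ k" .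
    have "(2::real) ^ k \<le> (2 / \<theta>) ^ k" using th by (intro power_mono) (auto simp: field_simps)
    then have u2: "16 * real Rk \<le> (16 * real a) * (2 / \<theta>) ^ k" unfolding rR using a
      by (simp add: mult.commute mult.left_commute)
    have "Q xk \<le> max (16 * real Rk) (8 / (xk * bs Rk))" by (rule A[OF xkpos xk_x0(2) Rk1])
    also have "\<dots> \<le> max ((16 * real a) * (2 / \<theta>) ^ k) ((8 * y0 / c1) * (2 / \<theta>) ^ k)"
      by (rule max.mono[OF u2 u1])
    also have "\<dots> = C * (2 / \<theta>) ^ k" unfolding C_def using th
      by (simp add: max_mult_distrib_right)
    finally have up: "Q xk \<le> C * (2 / \<theta>) ^ k" .
    have "c * (2 * q * \<theta>) ^ k < C * (2 / \<theta>) ^ k" using low' up by simp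
    moreover have "(2 * q * \<theta>) ^ k = (2 / \<theta>) ^ k * (q * (\<theta> * \<theta>)) ^ k"
    proof -
      have "(2 / \<theta>) * (q * (\<theta> * \<theta>)) = 2 * q * \<theta>" using th by (simp add: field_simps)
      then have "(2 * q * \<theta>) ^ k = ((2 / \<theta>) * (q * (\<theta> * \<theta>))) ^ k" by simp
      then show ?thesis by (simp only: power_mult_distrib)
    qed
    ultimately have "c * ((2 / \<theta>) ^ k * (q * (\<theta> * \<theta>)) ^ k) < C * (2 / \<theta>) ^ k"
      by (simp only:)
    moreover have "(2 / \<theta>) ^ k * (c * (q * (\<theta> * \<theta>)) ^ k) = c * ((2 / \<theta>) ^ k * (q * (\<theta> * \<theta>)) ^ k)"
      by (simp only: mult_ac)
    ultimately have "(2 / \<theta>) ^ k * (c * (q * (\<theta> * \<theta>)) ^ k) < (2 / \<theta>) ^ k * C"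
      by (simp only: mult.commute)
    then show ?thesis using th by (simp add: mult_less_cancel_left_pos)
  qed
  obtain k where "C / c < (q * (\<theta> * \<theta>)) ^ k" using real_arch_pow[OF qth] by blast
  then have "C < c * (q * (\<theta> * \<theta>)) ^ k" using cpos by (simp add: field_simps)
  then show False using key[of k] by simp
qed


lemma part2:
  fixes Q :: "real \<Rightarrow> real" and H :: "nat \<Rightarrow> real"
  assumes B: "\<And>x R. 0 < x \<Longrightarrow> x < 1 \<Longrightarrow> R \<ge> 1 \<Longrightarrow> 1 \<le> Q x * (x * (2 * H R + 1) + 2 / real R)"
    and H1: "\<And>R. R \<ge> 1 \<Longrightarrow> H R \<ge> 1"
    and Lh: "slowly_varying Lh" and R0: "R0 > 0"
    and hh: "\<forall>R::nat. real R > R0 \<longrightarrow> H R < real R powr dhb * Lh (real R)"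
    and x0: "0 < x0" "x0 < 1" and lhi: "slowly_varying_at_0 lhi"
    and su: "\<forall>x. 0 < x \<and> x < x0 \<longrightarrow> Q x < x powr (-1 + ds / 2) * lhi x"
    and dh0: "dhb \<ge> 0"
  shows "ds \<le> 2 * dhb / (1 + dhb)"
proof (rule ccontr)
  assume "\<not> ds \<le> 2 * dhb / (1 + dhb)"
  then have lt: "ds * (1 + dhb) > 2 * dhb" using dh0 by (simp add: field_simps)
  define \<alpha> where "\<alpha> = 1 - ds / 2"
  have ag: "(1 + dhb) * \<alpha> < 1" unfolding \<alpha>_def using lt by (simp add: algebra_simps)
  define \<rho> where "\<rho> = 2 powr ((1 + dhb) * \<alpha>) / 2"
  have r1: "\<rho> < 1" "\<rho> > 0"
  proof -
    have "2 powr ((1 + dhb) * \<alpha>) < 2 powr 1" using powr_less_mono[OF ag, of 2] by simp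
    then show "\<rho> < 1" "\<rho> > 0" unfolding \<rho>_def by auto
  qed
  define \<theta> where "\<theta> = sqrt (2 / (1 + \<rho>))"
  have th: "1 < \<theta>" unfolding \<theta>_def using r1 by auto
  have th2: "\<theta> * \<theta> = 2 / (1 + \<rho>)" unfolding \<theta>_def using r1 by simp
  have rth: "\<rho> * (\<theta> * \<theta>) < 1" unfolding th2 using r1 by (simp add: field_simps)
  have rth0: "\<rho> * (\<theta> * \<theta>) > 0" using r1 th by simp
  define \<mu> where "\<mu> = 2 powr (1 + dhb)"
  have mu2: "\<mu> = 2 * 2 powr dhb" unfolding \<mu>_def by (simp add: powr_add)
  have mu1: "\<mu> \<ge> 1" unfolding mu2 using dh0 ge_one_powr_ge_zero[of 2 dhb] by simp
  have mua: "\<mu> powr \<alpha> = 2 * \<rho>" unfolding \<mu>_def \<rho>_def by (simp add: powr_powr)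
  define M where "M y = lhi (1 / y)" for y
  have Msv: "slowly_varying M" unfolding M_def by (rule sv0_inv[OF lhi])
  obtain R1 where R1: "R1 > 0" "\<forall>y\<ge>R1. \<forall>k. Lh (2 ^ k * y) \<le> \<theta> ^ k * Lh y"
    using sv_upper[OF Lh _ th, of 2] by auto
  obtain R2 where R2: "R2 > 0" "\<forall>y\<ge>R2. \<forall>k. M (\<mu> ^ k * y) \<le> \<theta> ^ k * M y"
    using sv_upper[OF Msv mu1 th] by auto
  define a where "a = nat \<lceil>max R1 (R0 + 1)\<rceil>"
  have a: "real a \<ge> R1" "real a > R0" "a \<ge> 1" using nat_ceil_max[OF R0, of R1] unfolding a_def by auto
  define y0 where "y0 = max R2 (2 / x0)"
  have y0a: "y0 \<ge> R2" "y0 \<ge> 2 / x0" unfolding y0_def by auto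
  have "2 / x0 > 0" using x0 by simp
  then have y0: "y0 \<ge> R2" "y0 \<ge> 2 / x0" "y0 > 0" using y0a by linarith+
  have Lpos: "Lh (real a) > 0" using Lh a unfolding slowly_varying_def by simp
  have Mpos: "M y0 > 0" using Msv y0 unfolding slowly_varying_def by simp
  define c where "c = y0 powr \<alpha> * M y0"
  have cpos: "c > 0" unfolding c_def using Mpos y0 by simp
  define c1 where "c1 = real a powr dhb * Lh (real a)"
  have c1pos: "c1 > 0" unfolding c1_def using Lpos a by simp
  define C where "C = 3 * c1 / y0 + 2 / real a"
  have Cpos: "C > 0"
  proof -
    have "3 * c1 / y0 > 0" using c1pos y0 by simp
    moreover have "2 / real a > 0" using a by simp
    ultimately show ?thesis unfolding C_def by (rule add_pos_pos)
  qed
  have key: "1 \<le> (c * C) * (\<rho> * (\<theta> * \<theta>)) ^ k" for k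
  proof -
    define Rk where "Rk = 2 ^ k * a"
    have rR: "real Rk = 2 ^ k * real a" unfolding Rk_def by simp
    have Rk1: "Rk \<ge> 1" using a unfolding Rk_def by simp
    define xk where "xk = 1 / (\<mu> ^ k * y0)"
    have mk: "\<mu> ^ k \<ge> 1" using mu1 by (simp add: one_le_power)
    have xkpos: "xk > 0" unfolding xk_def using mu1 y0 by simp
    have "\<mu> ^ k * y0 \<ge> y0" using mult_right_mono[OF mk, of y0] y0 by simp
    then have xk_le: "xk \<le> 1 / y0" unfolding xk_def using y0 by (simp add: frac_le)
    have "1 / y0 \<le> x0 / 2" using y0 x0 by (simp add: field_simps)
    then have xk_s: "xk \<le> x0 / 2" using xk_le by simp
    then have xk_x0: "xk < x0" "xk < 1" using x0 by auto
    have "Q xk < xk powr (-1 + ds / 2) * lhi xk" using su xkpos xk_x0 by blast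
    moreover have "xk powr (-1 + ds / 2) = (\<mu> powr \<alpha>) ^ k * y0 powr \<alpha>"
    proof -
      have "xk powr (-1 + ds / 2) = (\<mu> ^ k * y0) powr \<alpha>"
        unfolding xk_def \<alpha>_def using mu1 y0 inv_powr_neg[of "\<mu> ^ k * y0" "1 - ds/2"] by simp
      then show ?thesis using mu1 y0 by (simp add: pow_mult_powr)
    qed
    moreover have "lhi xk \<le> \<theta> ^ k * M y0" using R2(2) y0 unfolding M_def xk_def by simp
    ultimately have upA: "Q xk < (2 * \<rho>) ^ k * y0 powr \<alpha> * lhi xk" "lhi xk \<le> \<theta> ^ k * M y0" unfolding mua
      by auto
    have Xn: "0 \<le> (2 * \<rho>) ^ k * y0 powr \<alpha>" using r1 by simp
    have "(2 * \<rho>) ^ k * y0 powr \<alpha> * lhi xk \<le> (2 * \<rho>) ^ k * y0 powr \<alpha> * (\<theta> ^ k * M y0)"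
      by (rule mult_left_mono[OF upA(2) Xn])
    then have "Q xk < (2 * \<rho>) ^ k * y0 powr \<alpha> * (\<theta> ^ k * M y0)" using upA(1) by linarith
    also have "\<dots> = c * (2 * \<rho> * \<theta>) ^ k" unfolding c_def by (simp only: power_mult_distrib mult_ac)
    finally have up: "Q xk < c * (2 * \<rho> * \<theta>) ^ k" .
    have "(1::real) \<le> 2 ^ k" by (simp add: one_le_power)
    then have "1 * real a \<le> 2 ^ k * real a" by (intro mult_right_mono) auto
    then have big: "real Rk > R0" using a unfolding rR by linarith
    have "H Rk < real Rk powr dhb * Lh (real Rk)" using hh big by blast
    also have "\<dots> = (2 powr dhb) ^ k * real a powr dhb * Lh (2 ^ k * real a)" unfolding rR using a by (simp add: pow_mult_powr)
    also have "\<dots> \<le> (2 powr dhb) ^ k * real a powr dhb * (\<theta> ^ k * Lh (real a))"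
      using R1(2) a by (intro mult_left_mono) auto
    also have "\<dots> = c1 * (2 powr dhb * \<theta>) ^ k"
      unfolding c1_def by (simp only: power_mult_distrib mult_ac)
    finally have Hl: "H Rk < c1 * (2 powr dhb * \<theta>) ^ k" .
    have H1k: "H Rk \<ge> 1" by (rule H1[OF Rk1])
    define t where "t = (\<theta> / 2) ^ k"
    have tpos: "t > 0" unfolding t_def using th by simp
    have "xk * (2 * H Rk + 1) \<le> xk * (3 * H Rk)" using H1k xkpos by (intro mult_left_mono) auto
    also have "\<dots> \<le> xk * (3 * (c1 * (2 powr dhb * \<theta>) ^ k))" using Hl xkpos by (intro mult_left_mono) auto
    also have "\<dots> = (3 * c1 / y0) * t"
    proof -
      define P where "P = (2 powr dhb) ^ k"
      define tt where "tt = \<theta> ^ k"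
      define s2 where "s2 = (2::real) ^ k"
      have P: "P > 0" unfolding P_def by simp
      have s2p: "s2 > 0" unfolding s2_def by simp
      have e1: "\<mu> ^ k = s2 * P" unfolding P_def s2_def mu2 by (simp add: power_mult_distrib)
      have e2: "(2 powr dhb * \<theta>) ^ k = P * tt" unfolding P_def tt_def by (simp add: power_mult_distrib)
      have e3: "t = tt / s2" unfolding t_def s2_def tt_def by (simp add: power_divide)
      show ?thesis unfolding xk_def e1 e2 e3 using P s2p y0 by (simp add: field_simps)
    qed
    finally have p1: "xk * (2 * H Rk + 1) \<le> (3 * c1 / y0) * t" .
    have "2 / real Rk = (2 / real a) * (1 / 2) ^ k" unfolding rR by (simp add: power_divide)
    also have "\<dots> \<le> (2 / real a) * t" unfolding t_def using th a
      by (intro mult_left_mono power_mono) auto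
    finally have p2: "2 / real Rk \<le> (2 / real a) * t" .
    have P: "xk * (2 * H Rk + 1) + 2 / real Rk \<le> C * t" unfolding C_def using p1 p2 by (simp add: algebra_simps)
    have Ppos: "xk * (2 * H Rk + 1) + 2 / real Rk > 0" using xkpos H1k Rk1 by (simp add: add_pos_pos)
    have one: "1 \<le> Q xk * (xk * (2 * H Rk + 1) + 2 / real Rk)" by (rule B[OF xkpos xk_x0(2) Rk1])
    then have Qpos: "Q xk > 0" using Ppos by (metis not_le mult_nonpos_nonneg less_le_trans zero_less_one less_imp_le)
    have "1 \<le> Q xk * (C * t)" using one P Qpos by (meson mult_left_mono less_imp_le order_trans)
    also have "\<dots> \<le> (c * (2 * \<rho> * \<theta>) ^ k) * (C * t)" using up Cpos tpos by (intro mult_right_mono) auto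
    also have "\<dots> = (c * C) * (\<rho> * (\<theta> * \<theta>)) ^ k"
    proof -
      have "(2 * \<rho> * \<theta>) * (\<theta> / 2) = \<rho> * (\<theta> * \<theta>)" by (simp add: field_simps)
      then have "(2 * \<rho> * \<theta>) ^ k * t = (\<rho> * (\<theta> * \<theta>)) ^ k" unfolding t_def by (metis power_mult_distrib)
      then show ?thesis by (simp only: mult_ac)
    qed
    finally show ?thesis .
  qed
  have cC: "c * C > 0" using cpos Cpos by simp
  obtain k where "(\<rho> * (\<theta> * \<theta>)) ^ k < 1 / (c * C)" using real_arch_pow_inv[OF _ rth, of "1 / (c * C)"] cC by auto
  then have "(c * C) * (\<rho> * (\<theta> * \<theta>)) ^ k < 1" using cC by (simp add: field_simps)
  then show False using key[of k] by simp
qed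


lemma ball_size_le: assumes pt: "planar_tree T" shows "ball_size T R \<le> card (ballV T R)"
  unfolding ball_size_def
proof (rule card_inj_on_le[of snd])
  show "inj_on snd (ball_edges T R)" unfolding ball_edges_def by (rule inj_onI) auto
  show "snd ` ball_edges T R \<subseteq> ballV T R" unfolding ball_edges_def ballV_def by auto
  show "finite (ballV T R)" by (rule finite_ballV[OF pt])
qed

lemma ball_size_ge1: assumes G: "Gamma T" and R: "R \<ge> 1" shows "ball_size T R \<ge> 1"
proof -
  have pt: "planar_tree T" using G unfolding Gamma_def by simp
  have "ball_edges T R \<subseteq> ballV T R \<times> ballV T R" unfolding ball_edges_def ballV_def by auto
  then have f: "finite (ball_edges T R)" using finite_ballV[OF pt] by (meson finite_SigmaI finite_subset)
  have "([], [0]) \<in> ball_edges T R" using G R pt_root[OF pt] unfolding ball_edges_def Gamma_def by auto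
  then show ?thesis unfolding ball_size_def using f by (metis One_nat_def Suc_leI card_gt_0_iff empty_iff)
qed


theorem theorem1:
  fixes T :: "nat list set" and dh dhb ds :: real
  assumes "Gamma_S_inf T"
    and "has_hausdorff_dim T dh"
    and "has_hull_dim T dhb"
    and "has_spectral_dim T ds"
  shows "2 * dh / (1 + dh) \<le> ds \<and> ds \<le> 2 * dhb / (1 + dhb)"
proof -
  have S: "Gamma_S_inf T" by (rule assms(1))
  have G: "Gamma T" using S unfolding Gamma_S_inf_def by simp
  have pt: "planar_tree T" using G unfolding Gamma_def by simp
  obtain R0 Llo Lhi where hd: "R0 > 0" "slowly_varying Llo" "slowly_varying Lhi"
    "\<forall>R::nat. real R > R0 \<longrightarrow> real R powr dh * Llo (real R) < real (ball_size T R) \<and>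
        real (ball_size T R) < real R powr dh * Lhi (real R)"
    using assms(2) unfolding has_hausdorff_dim_def by blast
  obtain R0' Hlo Hhi where hh: "R0' > 0" "slowly_varying Hlo" "slowly_varying Hhi"
    "\<forall>R::nat. real R > R0' \<longrightarrow> real R powr dhb * Hlo (real R) < real (hull_size T R) \<and>
        real (hull_size T R) < real R powr dhb * Hhi (real R)"
    using assms(3) unfolding has_hull_dim_def by blast
  obtain x0 llo lhi where sd: "0 < x0" "x0 < 1" "slowly_varying_at_0 llo" "slowly_varying_at_0 lhi"
    "\<forall>x. 0 < x \<and> x < x0 \<longrightarrow> x powr (-1 + ds / 2) * llo x < Q_gen T x \<and>
        Q_gen T x < x powr (-1 + ds / 2) * lhi x"
    using assms(4) unfolding has_spectral_dim_def by blast
  have dh0: "dh \<ge> 0"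
  proof (rule dim_nonneg[OF hd(3) hd(1), of "\<lambda>R. real (ball_size T R)"])
    show "\<forall>R::nat. real R > R0 \<longrightarrow> real (ball_size T R) < real R powr dh * Lhi (real R)" using hd(4) by blast
    fix R :: nat assume "R \<ge> 1"
    then show "1 \<le> real (ball_size T R)" using ball_size_ge1[OF G] by simp
  qed
  have dhb0: "dhb \<ge> 0"
  proof (rule dim_nonneg[OF hh(3) hh(1), of "\<lambda>R. real (hull_size T R)"])
    show "\<forall>R::nat. real R > R0' \<longrightarrow> real (hull_size T R) < real R powr dhb * Hhi (real R)" using hh(4) by blast
    fix R :: nat assume "R \<ge> 1"
    moreover have "hull_size T R \<ge> R" unfolding hull_size_def by simp
    ultimately show "1 \<le> real (hull_size T R)" by simp
  qed
  have p1: "2 * dh / (1 + dh) \<le> ds"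
  proof (rule part1[of "Q_gen T" "\<lambda>R. real (ball_size T R)", OF _ hd(2) hd(1) _ sd(1,2,3) _ dh0])
    fix x :: real and R :: nat assume x: "0 < x" "x \<le> 3/4" and R: "R \<ge> 1"
    have b1: "real (ball_size T R) \<ge> 1" using ball_size_ge1[OF G R] by simp
    have b2: "real (ball_size T R) \<le> real (card (ballV T R))" using ball_size_le[OF pt] by simp
    have "Q_gen T x \<le> max (16 * real R) (8 / (x * real (card (ballV T R))))" by (rule QA[OF G x R])
    also have "\<dots> \<le> max (16 * real R) (8 / (x * real (ball_size T R)))"
    proof (rule max.mono[OF order_refl])
      have "x * real (ball_size T R) \<le> x * real (card (ballV T R))" using b2 x by (intro mult_left_mono) auto
      moreover have "0 < x * real (ball_size T R)" using x b1 by simp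
      ultimately show "8 / (x * real (card (ballV T R))) \<le> 8 / (x * real (ball_size T R))"
        by (intro divide_left_mono) auto
    qed
    finally show "Q_gen T x \<le> max (16 * real R) (8 / (x * real (ball_size T R)))" .
  next
    show "\<forall>R::nat. real R > R0 \<longrightarrow> real R powr dh * Llo (real R) < real (ball_size T R)" using hd(4) by blast
    show "\<forall>x. 0 < x \<and> x < x0 \<longrightarrow> x powr (-1 + ds / 2) * llo x < Q_gen T x" using sd(5) by blast
  qed
  have p2: "ds \<le> 2 * dhb / (1 + dhb)"
  proof (rule part2[of "Q_gen T" "\<lambda>R. real (hull_size T R)", OF _ _ hh(3) hh(1) _ sd(1,2,4) _ dhb0])
    fix x :: real and R :: nat assume x: "0 < x" "x < 1" and R: "R \<ge> 1"
    show "1 \<le> Q_gen T x * (x * (2 * real (hull_size T R) + 1) + 2 / real R)" by (rule QB[OF S R x])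
  next
    fix R :: nat assume "R \<ge> 1"
    moreover have "hull_size T R \<ge> R" unfolding hull_size_def by simp
    ultimately show "1 \<le> real (hull_size T R)" by simp
  next
    show "\<forall>R::nat. real R > R0' \<longrightarrow> real (hull_size T R) < real R powr dhb * Hhi (real R)" using hh(4) by blast
    show "\<forall>x. 0 < x \<and> x < x0 \<longrightarrow> Q_gen T x < x powr (-1 + ds / 2) * lhi x" using sd(5) by blast
  qed
  show ?thesis using p1 p2 by simp
qed

end
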